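(* Let $\mathcal{C}$ be a skeletally small triangulated category and $\mathcal{B}$ a radical dense subcategory of $\mathcal{C}$. Let $H$ be the image of $G(\mathcal{B})_{\mathbb{Q}}\to G(\mathcal{C})_{\mathbb{Q}}$, and let $\mathcal{D}$ be the unique maximal element (under inclusion) of the set $\mathcal{I}(H)$ of dense subcategories $\mathcal{D}'$ of $\mathcal{C}$ with $\operatorname{image}(G(\mathcal{D}')_{\mathbb{Q}}\to G(\mathcal{C})_{\mathbb{Q}})=H$. Then $\mathcal{B}=\mathcal{D}$.
   Context: $G(-)$ denotes the Grothendieck group of a triangulated category; $H_{\mathbb{Q}}=H\otimes_{\mathbb{Z}}\mathbb{Q}$. A dense subcategory is a triangulated subcategory $\mathcal{D}$ (full, closed under $[\pm1]$, isomorphisms and cones) such that for every $U\in\mathcal{C}$ there is $V$ with $U\oplus V\in\mathcal{D}$; it is radical if $U^n\in\mathcal{D}$ for some $n\ge1$ implies $U\in\mathcal{D}$. The set $\mathcal{I}(H)$ has a unique maximal element. *)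

theory Defs
  imports Complex_Main
begin

text \<open>A category is given by an object set, a morphism set with source/target,
composition (cmp g f = g after f), identities; the preadditive structure is given by
addition, negation and zero morphisms on each hom set; shO/shM is the shift
functor on objects/morphisms; dtri is the class of distinguished triangles
(f,g,h) with f : X -> Y, g : Y -> Z, h : Z -> X[1].\<close>

record ('o, 'm) tricat =
  Ob :: "'o set"
  Mor :: "'m set"
  src :: "'m \<Rightarrow> 'o"
  tgt :: "'m \<Rightarrow> 'o"
  cmp :: "'m \<Rightarrow> 'm \<Rightarrow> 'm"
  idm :: "'o \<Rightarrow> 'm"
  madd :: "'m \<Rightarrow> 'm \<Rightarrow> 'm"
  mneg :: "'m \<Rightarrow> 'm"
  mzero :: "'o \<Rightarrow> 'o \<Rightarrow> 'm"
  shO :: "'o \<Rightarrow> 'o"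
  shM :: "'m \<Rightarrow> 'm"
  dtri :: "('m \<times> 'm \<times> 'm) set"

definition hom :: "('o, 'm) tricat \<Rightarrow> 'o \<Rightarrow> 'o \<Rightarrow> 'm set" where
  "hom C X Y = {f \<in> Mor C. src C f = X \<and> tgt C f = Y}"

definition is_category :: "('o, 'm) tricat \<Rightarrow> bool" where
  "is_category C \<longleftrightarrow>
     (\<forall>f\<in>Mor C. src C f \<in> Ob C \<and> tgt C f \<in> Ob C) \<and>
     (\<forall>X\<in>Ob C. idm C X \<in> hom C X X) \<and>
     (\<forall>f\<in>Mor C. \<forall>g\<in>Mor C. tgt C f = src C g \<longrightarrow> cmp C g f \<in> hom C (src C f) (tgt C g)) \<and>
     (\<forall>f\<in>Mor C. cmp C f (idm C (src C f)) = f \<and> cmp C (idm C (tgt C f)) f = f) \<and>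
     (\<forall>f\<in>Mor C. \<forall>g\<in>Mor C. \<forall>h\<in>Mor C. tgt C f = src C g \<longrightarrow> tgt C g = src C h \<longrightarrow>
        cmp C h (cmp C g f) = cmp C (cmp C h g) f)"

definition preadditive :: "('o, 'm) tricat \<Rightarrow> bool" where
  "preadditive C \<longleftrightarrow>
     (\<forall>X\<in>Ob C. \<forall>Y\<in>Ob C.
        mzero C X Y \<in> hom C X Y \<and>
        (\<forall>f\<in>hom C X Y. \<forall>g\<in>hom C X Y.
            madd C f g \<in> hom C X Y \<and> madd C f g = madd C g f) \<and>
        (\<forall>f\<in>hom C X Y. \<forall>g\<in>hom C X Y. \<forall>h\<in>hom C X Y.
            madd C (madd C f g) h = madd C f (madd C g h)) \<and>
        (\<forall>f\<in>hom C X Y. mneg C f \<in> hom C X Y \<and> madd C f (mneg C f) = mzero C X Y \<and>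
            madd C f (mzero C X Y) = f)) \<and>
     (\<forall>X\<in>Ob C. \<forall>Y\<in>Ob C. \<forall>Z\<in>Ob C.
        (\<forall>f\<in>hom C X Y. \<forall>g\<in>hom C X Y. \<forall>h\<in>hom C Y Z.
            cmp C h (madd C f g) = madd C (cmp C h f) (cmp C h g)) \<and>
        (\<forall>f\<in>hom C X Y. \<forall>g\<in>hom C Y Z. \<forall>h\<in>hom C Y Z.
            cmp C (madd C g h) f = madd C (cmp C g f) (cmp C h f)))"

definition zero_obj :: "('o, 'm) tricat \<Rightarrow> 'o \<Rightarrow> bool" where
  "zero_obj C Z \<longleftrightarrow> Z \<in> Ob C \<and>
     (\<forall>X\<in>Ob C. (\<exists>!f. f \<in> hom C Z X) \<and> (\<exists>!f. f \<in> hom C X Z))"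

definition is_biprod :: "('o, 'm) tricat \<Rightarrow> 'o \<Rightarrow> 'o \<Rightarrow> 'o \<Rightarrow> bool" where
  "is_biprod C X Y S \<longleftrightarrow> X \<in> Ob C \<and> Y \<in> Ob C \<and> S \<in> Ob C \<and>
     (\<exists>i1\<in>hom C X S. \<exists>i2\<in>hom C Y S. \<exists>p1\<in>hom C S X. \<exists>p2\<in>hom C S Y.
        cmp C p1 i1 = idm C X \<and> cmp C p2 i2 = idm C Y \<and>
        cmp C p2 i1 = mzero C X Y \<and> cmp C p1 i2 = mzero C Y X \<and>
        madd C (cmp C i1 p1) (cmp C i2 p2) = idm C S)"

definition additive :: "('o, 'm) tricat \<Rightarrow> bool" where
  "additive C \<longleftrightarrow> is_category C \<and> preadditive C \<and> (\<exists>Z. zero_obj C Z) \<and>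
     (\<forall>X\<in>Ob C. \<forall>Y\<in>Ob C. \<exists>S. is_biprod C X Y S)"

definition iso_mor :: "('o, 'm) tricat \<Rightarrow> 'm \<Rightarrow> bool" where
  "iso_mor C f \<longleftrightarrow> f \<in> Mor C \<and>
     (\<exists>g\<in>hom C (tgt C f) (src C f). cmp C g f = idm C (src C f) \<and> cmp C f g = idm C (tgt C f))"

definition isomorphic :: "('o, 'm) tricat \<Rightarrow> 'o \<Rightarrow> 'o \<Rightarrow> bool" where
  "isomorphic C X Y \<longleftrightarrow> (\<exists>f\<in>hom C X Y. iso_mor C f)"

definition shift_ok :: "('o, 'm) tricat \<Rightarrow> bool" where
  "shift_ok C \<longleftrightarrow>
     (\<forall>X\<in>Ob C. shO C X \<in> Ob C) \<and>
     (\<forall>X\<in>Ob C. \<forall>Y\<in>Ob C. \<forall>f\<in>hom C X Y. shM C f \<in> hom C (shO C X) (shO C Y)) \<and>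
     (\<forall>X\<in>Ob C. shM C (idm C X) = idm C (shO C X)) \<and>
     (\<forall>f\<in>Mor C. \<forall>g\<in>Mor C. tgt C f = src C g \<longrightarrow> shM C (cmp C g f) = cmp C (shM C g) (shM C f)) \<and>
     (\<forall>X\<in>Ob C. \<forall>Y\<in>Ob C. \<forall>f\<in>hom C X Y. \<forall>g\<in>hom C X Y.
         shM C (madd C f g) = madd C (shM C f) (shM C g)) \<and>
     (\<forall>X\<in>Ob C. \<forall>Y\<in>Ob C. bij_betw (shM C) (hom C X Y) (hom C (shO C X) (shO C Y))) \<and>
     (\<forall>Y\<in>Ob C. \<exists>X\<in>Ob C. isomorphic C (shO C X) Y)"

definition is_tri :: "('o, 'm) tricat \<Rightarrow> 'm \<Rightarrow> 'm \<Rightarrow> 'm \<Rightarrow> bool" where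
  "is_tri C f g h \<longleftrightarrow> f \<in> Mor C \<and> g \<in> Mor C \<and> h \<in> Mor C \<and>
     tgt C f = src C g \<and> tgt C g = src C h \<and> tgt C h = shO C (src C f)"

definition tri_mor :: "('o, 'm) tricat \<Rightarrow> 'm \<Rightarrow> 'm \<Rightarrow> 'm \<Rightarrow> 'm \<Rightarrow> 'm \<Rightarrow> 'm
                       \<Rightarrow> 'm \<Rightarrow> 'm \<Rightarrow> 'm \<Rightarrow> bool" where
  "tri_mor C f g h f' g' h' u v w \<longleftrightarrow>
     u \<in> hom C (src C f) (src C f') \<and> v \<in> hom C (src C g) (src C g') \<and>
     w \<in> hom C (src C h) (src C h') \<and>
     cmp C v f = cmp C f' u \<and> cmp C w g = cmp C g' v \<and> cmp C (shM C u) h = cmp C h' w"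

definition triangulated :: "('o, 'm) tricat \<Rightarrow> bool" where
  "triangulated C \<longleftrightarrow> additive C \<and> shift_ok C \<and>
     (\<forall>f g h. (f, g, h) \<in> dtri C \<longrightarrow> is_tri C f g h) \<and>
     \<comment> \<open>TR1: closure under isomorphism of triangles\<close>
     (\<forall>f g h f' g' h' u v w. (f, g, h) \<in> dtri C \<and> is_tri C f' g' h' \<and>
        tri_mor C f g h f' g' h' u v w \<and> iso_mor C u \<and> iso_mor C v \<and> iso_mor C w
        \<longrightarrow> (f', g', h') \<in> dtri C) \<and>
     \<comment> \<open>TR1: X -> X -> 0 -> X[1] is distinguished\<close>
     (\<forall>X\<in>Ob C. \<exists>Z. zero_obj C Z \<and> (idm C X, mzero C X Z, mzero C Z (shO C X)) \<in> dtri C) \<and>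
     \<comment> \<open>TR1: every morphism extends to a distinguished triangle\<close>
     (\<forall>f\<in>Mor C. \<exists>g h. (f, g, h) \<in> dtri C) \<and>
     \<comment> \<open>TR2: rotation\<close>
     (\<forall>f g h. (f, g, h) \<in> dtri C \<longrightarrow> (g, h, mneg C (shM C f)) \<in> dtri C) \<and>
     \<comment> \<open>TR3: completion of morphisms of triangles\<close>
     (\<forall>f g h f' g' h' u v. (f, g, h) \<in> dtri C \<and> (f', g', h') \<in> dtri C \<and>
        u \<in> hom C (src C f) (src C f') \<and> v \<in> hom C (src C g) (src C g') \<and>
        cmp C v f = cmp C f' u \<longrightarrow> (\<exists>w. tri_mor C f g h f' g' h' u v w)) \<and>
     \<comment> \<open>TR4: octahedral axiom (Stacks Project 05QK)\<close>
     (\<forall>f g p1 d1 p2 d2 p3 d3. f \<in> Mor C \<and> g \<in> Mor C \<and> tgt C f = src C g \<and>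
        (f, p1, d1) \<in> dtri C \<and> (cmp C g f, p2, d2) \<in> dtri C \<and> (g, p3, d3) \<in> dtri C \<longrightarrow>
        (\<exists>a b. a \<in> hom C (tgt C p1) (tgt C p2) \<and> b \<in> hom C (tgt C p2) (tgt C p3) \<and>
           (a, b, cmp C (shM C p1) d3) \<in> dtri C \<and>
           cmp C a p1 = cmp C p2 g \<and> cmp C d2 a = d1 \<and>
           cmp C b p2 = p3 \<and> cmp C d3 b = cmp C (shM C f) d2))"

text \<open>Full triangulated subcategories are identified with their object sets.\<close>
definition tri_sub :: "('o, 'm) tricat \<Rightarrow> 'o set \<Rightarrow> bool" where
  "tri_sub C D \<longleftrightarrow> D \<subseteq> Ob C \<and> (\<exists>Z\<in>D. zero_obj C Z) \<and>
     (\<forall>X\<in>D. \<forall>Y\<in>Ob C. isomorphic C X Y \<longrightarrow> Y \<in> D) \<and>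
     (\<forall>X\<in>Ob C. X \<in> D \<longleftrightarrow> shO C X \<in> D) \<and>
     (\<forall>f g h. (f, g, h) \<in> dtri C \<and> src C f \<in> D \<and> src C g \<in> D \<longrightarrow> src C h \<in> D)"

definition dense_sub :: "('o, 'm) tricat \<Rightarrow> 'o set \<Rightarrow> bool" where
  "dense_sub C D \<longleftrightarrow> tri_sub C D \<and>
     (\<forall>U\<in>Ob C. \<exists>V\<in>Ob C. \<exists>S\<in>D. is_biprod C U V S)"

primrec npow :: "('o, 'm) tricat \<Rightarrow> 'o \<Rightarrow> nat \<Rightarrow> 'o \<Rightarrow> bool" where
  "npow C U 0 S = zero_obj C S"
| "npow C U (Suc n) S = (\<exists>T\<in>Ob C. npow C U n T \<and> is_biprod C T U S)"

definition radical :: "('o, 'm) tricat \<Rightarrow> 'o set \<Rightarrow> bool" where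
  "radical C D \<longleftrightarrow> (\<forall>U\<in>Ob C. \<forall>n S. n \<ge> 1 \<and> npow C U n S \<and> S \<in> D \<longrightarrow> U \<in> D)"

text \<open>G(C)_Q is the quotient of the Q-vector space of finitely supported
rational combinations of objects by the span of the triangle relations.
A subspace of G(C)_Q is represented by its preimage in the free space.\<close>

definition delta :: "'o \<Rightarrow> 'o \<Rightarrow> rat" where
  "delta X = (\<lambda>Y. if Y = X then 1 else 0)"

definition qspan :: "('o \<Rightarrow> rat) set \<Rightarrow> ('o \<Rightarrow> rat) set" where
  "qspan S = {v. \<exists>F c. finite F \<and> F \<subseteq> S \<and> v = (\<lambda>x. \<Sum>s\<in>F. c s * s x)}"

definition tri_rels :: "('o, 'm) tricat \<Rightarrow> ('o \<Rightarrow> rat) set" where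
  "tri_rels C = {(\<lambda>x. delta (src C f) x - delta (src C g) x + delta (src C h) x) | f g h.
                   (f, g, h) \<in> dtri C}"

text \<open>Preimage in the free space of image(G(D)_Q -> G(C)_Q).\<close>
definition gimgQ :: "('o, 'm) tricat \<Rightarrow> 'o set \<Rightarrow> ('o \<Rightarrow> rat) set" where
  "gimgQ C D = qspan (delta ` D \<union> tri_rels C)"

definition Iset :: "('o, 'm) tricat \<Rightarrow> ('o \<Rightarrow> rat) set \<Rightarrow> 'o set set" where
  "Iset C H = {D. dense_sub C D \<and> gimgQ C D = H}"

definition maximal_in :: "'a set set \<Rightarrow> 'a set \<Rightarrow> bool" where
  "maximal_in S D \<longleftrightarrow> D \<in> S \<and> (\<forall>D'\<in>S. D \<subseteq> D' \<longrightarrow> D' = D)"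

end

theory Submission
  imports Defs "HOL-Algebra.FiniteProduct" "HOL-Library.Function_Algebras"
begin

locale TC =
  fixes C :: "('o, 'm) tricat"
  assumes tri: "triangulated C"
begin

abbreviation H where "H X Y \<equiv> Defs.hom C X Y"

lemma hom_iff: "f \<in> H X Y \<longleftrightarrow> f \<in> Mor C \<and> src C f = X \<and> tgt C f = Y"
  by (simp add: Defs.hom_def)

lemma addi: "additive C" using tri by (simp add: triangulated_def)
lemma cat: "is_category C" using addi by (simp add: additive_def)
lemma pre: "preadditive C" using addi by (simp add: additive_def)
lemma shok: "shift_ok C" using tri by (simp add: triangulated_def)

lemma catD:
  "\<forall>f\<in>Mor C. src C f \<in> Ob C \<and> tgt C f \<in> Ob C"
  "\<forall>X\<in>Ob C. idm C X \<in> H X X"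
  "\<forall>f\<in>Mor C. \<forall>g\<in>Mor C. tgt C f = src C g \<longrightarrow> cmp C g f \<in> H (src C f) (tgt C g)"
  "\<forall>f\<in>Mor C. cmp C f (idm C (src C f)) = f \<and> cmp C (idm C (tgt C f)) f = f"
  "\<forall>f\<in>Mor C. \<forall>g\<in>Mor C. \<forall>h\<in>Mor C. tgt C f = src C g \<longrightarrow> tgt C g = src C h \<longrightarrow>
        cmp C h (cmp C g f) = cmp C (cmp C h g) f"
  using cat unfolding is_category_def by blast+

lemma mor_ob: "f \<in> Mor C \<Longrightarrow> src C f \<in> Ob C \<and> tgt C f \<in> Ob C"
  using catD(1) by blast

lemma hom_ob: "f \<in> H X Y \<Longrightarrow> X \<in> Ob C \<and> Y \<in> Ob C"
  using mor_ob by (auto simp: hom_iff)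

lemma hom_mor: "f \<in> H X Y \<Longrightarrow> f \<in> Mor C"
  by (simp add: hom_iff)

lemma hom_in: "f \<in> Mor C \<Longrightarrow> f \<in> H (src C f) (tgt C f)"
  by (simp add: hom_iff)

lemma id_hom: "X \<in> Ob C \<Longrightarrow> idm C X \<in> H X X"
  using catD(2) by blast

lemma cmp_hom: "f \<in> H X Y \<Longrightarrow> g \<in> H Y Z \<Longrightarrow> cmp C g f \<in> H X Z"
proof -
  assume a: "f \<in> H X Y" "g \<in> H Y Z"
  then have "f \<in> Mor C" "g \<in> Mor C" "tgt C f = src C g" "src C f = X" "tgt C g = Z"
    by (auto simp: hom_iff)
  then show ?thesis using catD(3) by blast
qed

lemma id_l: "f \<in> H X Y \<Longrightarrow> cmp C (idm C Y) f = f"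
proof -
  assume a: "f \<in> H X Y"
  then have "f \<in> Mor C" "tgt C f = Y" by (auto simp: hom_iff)
  then show ?thesis using catD(4) by blast
qed

lemma id_r: "f \<in> H X Y \<Longrightarrow> cmp C f (idm C X) = f"
proof -
  assume a: "f \<in> H X Y"
  then have "f \<in> Mor C" "src C f = X" by (auto simp: hom_iff)
  then show ?thesis using catD(4) by blast
qed

lemma assoc: "f \<in> H X Y \<Longrightarrow> g \<in> H Y Z \<Longrightarrow> h \<in> H Z W \<Longrightarrow>
   cmp C (cmp C h g) f = cmp C h (cmp C g f)"
proof -
  assume a: "f \<in> H X Y" "g \<in> H Y Z" "h \<in> H Z W"
  then have "f \<in> Mor C" "g \<in> Mor C" "h \<in> Mor C" "tgt C f = src C g" "tgt C g = src C h"
    by (auto simp: hom_iff)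
  then show ?thesis using catD(5) by metis
qed

lemma preP: "X \<in> Ob C \<Longrightarrow> Y \<in> Ob C \<Longrightarrow>
        mzero C X Y \<in> H X Y \<and>
        (\<forall>f\<in>H X Y. \<forall>g\<in>H X Y.
            madd C f g \<in> H X Y \<and> madd C f g = madd C g f) \<and>
        (\<forall>f\<in>H X Y. \<forall>g\<in>H X Y. \<forall>h\<in>H X Y.
            madd C (madd C f g) h = madd C f (madd C g h)) \<and>
        (\<forall>f\<in>H X Y. mneg C f \<in> H X Y \<and> madd C f (mneg C f) = mzero C X Y \<and>
            madd C f (mzero C X Y) = f)"
  using pre unfolding preadditive_def by blast

lemma preD: "X \<in> Ob C \<Longrightarrow> Y \<in> Ob C \<Longrightarrow> Z \<in> Ob C \<Longrightarrow>
        (\<forall>f\<in>H X Y. \<forall>g\<in>H X Y. \<forall>h\<in>H Y Z.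
            cmp C h (madd C f g) = madd C (cmp C h f) (cmp C h g)) \<and>
        (\<forall>f\<in>H X Y. \<forall>g\<in>H Y Z. \<forall>h\<in>H Y Z.
            cmp C (madd C g h) f = madd C (cmp C g f) (cmp C h f))"
  using pre unfolding preadditive_def by blast

lemma zero_hom: "X \<in> Ob C \<Longrightarrow> Y \<in> Ob C \<Longrightarrow> mzero C X Y \<in> H X Y"
  using preP by blast

lemma add_hom: "f \<in> H X Y \<Longrightarrow> g \<in> H X Y \<Longrightarrow> madd C f g \<in> H X Y"
  using preP hom_ob by blast

lemma add_comm: "f \<in> H X Y \<Longrightarrow> g \<in> H X Y \<Longrightarrow> madd C f g = madd C g f"
  using preP hom_ob by blast

lemma add_assoc: "f \<in> H X Y \<Longrightarrow> g \<in> H X Y \<Longrightarrow> h \<in> H X Y \<Longrightarrow>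
   madd C (madd C f g) h = madd C f (madd C g h)"
  using preP hom_ob by blast

lemma neg_hom: "f \<in> H X Y \<Longrightarrow> mneg C f \<in> H X Y"
  using preP hom_ob by blast

lemma add_neg: "f \<in> H X Y \<Longrightarrow> madd C f (mneg C f) = mzero C X Y"
  using preP hom_ob by blast

lemma add_zero: "f \<in> H X Y \<Longrightarrow> madd C f (mzero C X Y) = f"
  using preP hom_ob by blast

lemma add_zero_l: "f \<in> H X Y \<Longrightarrow> madd C (mzero C X Y) f = f"
  using add_zero add_comm zero_hom hom_ob by metis

lemma neg_add: "f \<in> H X Y \<Longrightarrow> madd C (mneg C f) f = mzero C X Y"
  using add_neg add_comm neg_hom by metis

lemma distl: "f \<in> H X Y \<Longrightarrow> g \<in> H X Y \<Longrightarrow> h \<in> H Y Z \<Longrightarrow>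
   cmp C h (madd C f g) = madd C (cmp C h f) (cmp C h g)"
  using preD hom_ob by blast

lemma distr: "f \<in> H X Y \<Longrightarrow> g \<in> H Y Z \<Longrightarrow> h \<in> H Y Z \<Longrightarrow>
   cmp C (madd C g h) f = madd C (cmp C g f) (cmp C h f)"
  using preD hom_ob by blast

lemma sub_cancel: "a \<in> H X Y \<Longrightarrow> b \<in> H X Y \<Longrightarrow> madd C (madd C a b) (mneg C b) = a"
  by (simp add: add_assoc add_neg add_zero neg_hom)

lemma add_cancel:
  assumes "f \<in> H X Y" "g \<in> H X Y" "k \<in> H X Y" "madd C f k = madd C g k"
  shows "f = g"
  using sub_cancel[OF assms(1,3)] sub_cancel[OF assms(2,3)] assms(4) by metis

lemma add_cancel_l:
  assumes "f \<in> H X Y" "g \<in> H X Y" "k \<in> H X Y" "madd C k f = madd C k g"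
  shows "f = g"
  using add_cancel[OF assms(1-3)] assms add_comm by metis

lemma self_zero:
  assumes "f \<in> H X Y" "madd C f f = f" shows "f = mzero C X Y"
  using add_cancel[OF assms(1) zero_hom[OF _ ] assms(1)] assms add_zero_l hom_ob by metis

lemma cmp_zero_r:
  assumes "h \<in> H Y Z" "X \<in> Ob C" shows "cmp C h (mzero C X Y) = mzero C X Z"
proof -
  have Y: "Y \<in> Ob C" "Z \<in> Ob C" using assms hom_ob by auto
  have z: "mzero C X Y \<in> H X Y" using Y assms zero_hom by auto
  have "cmp C h (mzero C X Y) = cmp C h (madd C (mzero C X Y) (mzero C X Y))"
    using z add_zero by simp
  also have "\<dots> = madd C (cmp C h (mzero C X Y)) (cmp C h (mzero C X Y))"
    using distl z assms by blast
  finally show ?thesis using self_zero cmp_hom z assms by metis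
qed

lemma cmp_zero_l:
  assumes "f \<in> H X Y" "Z \<in> Ob C" shows "cmp C (mzero C Y Z) f = mzero C X Z"
proof -
  have Y: "X \<in> Ob C" "Y \<in> Ob C" using assms hom_ob by auto
  have z: "mzero C Y Z \<in> H Y Z" using Y assms zero_hom by auto
  have "cmp C (mzero C Y Z) f = cmp C (madd C (mzero C Y Z) (mzero C Y Z)) f"
    using z add_zero by simp
  also have "\<dots> = madd C (cmp C (mzero C Y Z) f) (cmp C (mzero C Y Z) f)"
    using distr z assms by blast
  finally show ?thesis using self_zero cmp_hom z assms by metis
qed

lemma neg_unique:
  assumes "f \<in> H X Y" "g \<in> H X Y" "madd C f g = mzero C X Y" shows "g = mneg C f"
  using add_cancel_l[OF assms(2) neg_hom[OF assms(1)] assms(1)] assms add_neg by metis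

lemma neg_neg: "f \<in> H X Y \<Longrightarrow> mneg C (mneg C f) = f"
  using neg_unique[of "mneg C f" X Y f] neg_hom neg_add by metis

lemma neg_zero: "X \<in> Ob C \<Longrightarrow> Y \<in> Ob C \<Longrightarrow> mneg C (mzero C X Y) = mzero C X Y"
  using neg_unique[of "mzero C X Y" X Y "mzero C X Y"] zero_hom add_zero by metis

lemma neg_inj: "f \<in> H X Y \<Longrightarrow> g \<in> H X Y \<Longrightarrow> mneg C f = mneg C g \<Longrightarrow> f = g"
  using neg_neg by metis

lemma cmp_neg_r:
  assumes "f \<in> H X Y" "h \<in> H Y Z" shows "cmp C h (mneg C f) = mneg C (cmp C h f)"
proof -
  have "madd C (cmp C h f) (cmp C h (mneg C f)) = cmp C h (mzero C X Y)"
    using distl[OF assms(1) neg_hom[OF assms(1)] assms(2)] add_neg assms by simp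
  also have "\<dots> = mzero C X Z" using cmp_zero_r assms hom_ob by blast
  finally show ?thesis using neg_unique cmp_hom neg_hom assms by metis
qed

lemma cmp_neg_l:
  assumes "f \<in> H X Y" "h \<in> H Y Z" shows "cmp C (mneg C h) f = mneg C (cmp C h f)"
proof -
  have "madd C (cmp C h f) (cmp C (mneg C h) f) = cmp C (mzero C Y Z) f"
    using distr[OF assms(1) assms(2) neg_hom[OF assms(2)]] add_neg assms by simp
  also have "\<dots> = mzero C X Z" using cmp_zero_l assms hom_ob by blast
  finally show ?thesis using neg_unique cmp_hom neg_hom assms by metis
qed


lemma sub_cancel2: "a \<in> H X Y \<Longrightarrow> b \<in> H X Y \<Longrightarrow> madd C (madd C a (mneg C b)) b = a"
  by (simp add: add_assoc neg_add add_zero neg_hom)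

lemma sub_zero_eq: "a \<in> H X Y \<Longrightarrow> b \<in> H X Y \<Longrightarrow> madd C a (mneg C b) = mzero C X Y \<Longrightarrow> a = b"
  using neg_unique neg_neg neg_hom by metis

lemma zero_obj_ob: "zero_obj C Z \<Longrightarrow> Z \<in> Ob C"
  by (simp add: zero_obj_def)

lemma zero_from: "zero_obj C Z \<Longrightarrow> f \<in> H Z X \<Longrightarrow> f = mzero C Z X"
  unfolding zero_obj_def using zero_hom hom_ob by metis

lemma zero_to: "zero_obj C Z \<Longrightarrow> f \<in> H X Z \<Longrightarrow> f = mzero C X Z"
  unfolding zero_obj_def using zero_hom hom_ob by metis

lemma zero_factor: "zero_obj C Z \<Longrightarrow> f \<in> H X Z \<Longrightarrow> g \<in> H Z Y \<Longrightarrow> cmp C g f = mzero C X Y"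
  using zero_from cmp_zero_l hom_ob by metis

lemma zero_objI:
  assumes X: "X \<in> Ob C" and z: "idm C X = mzero C X X" shows "zero_obj C X"
proof -
  have a: "f = mzero C X Y" if "f \<in> H X Y" for f Y
    using id_r[OF that] z cmp_zero_r[OF that X] by simp
  have b: "f = mzero C Y X" if "f \<in> H Y X" for f Y
    using id_l[OF that] z cmp_zero_l[OF that X] by simp
  have "\<forall>Y\<in>Ob C. (\<exists>!f. f \<in> H X Y) \<and> (\<exists>!f. f \<in> H Y X)"
    using a b zero_hom X by metis
  then show ?thesis unfolding zero_obj_def using X by blast
qed

lemma zero_obj_id: "zero_obj C Z \<Longrightarrow> idm C Z = mzero C Z Z"
  using zero_from id_hom zero_obj_ob by metis

lemma iso_hom: "iso_mor C f \<Longrightarrow> f \<in> H (src C f) (tgt C f)"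
  by (simp add: iso_mor_def hom_iff)

lemma isomorphicE:
  assumes "isomorphic C X Y"
  obtains f g where "f \<in> H X Y" "g \<in> H Y X" "cmp C g f = idm C X" "cmp C f g = idm C Y"
proof -
  obtain f where f: "f \<in> H X Y" "iso_mor C f" using assms unfolding isomorphic_def by blast
  then have s: "src C f = X" "tgt C f = Y" by (auto simp: hom_iff)
  obtain g where "g \<in> H (tgt C f) (src C f)" "cmp C g f = idm C (src C f)" "cmp C f g = idm C (tgt C f)"
    using f(2) unfolding iso_mor_def by blast
  then show ?thesis using that f s by simp
qed

lemma isomorphicI:
  assumes "f \<in> H X Y" "g \<in> H Y X" "cmp C g f = idm C X" "cmp C f g = idm C Y"
  shows "isomorphic C X Y"
proof -
  have s: "src C f = X" "tgt C f = Y" "f \<in> Mor C" using assms by (auto simp: hom_iff)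
  have "iso_mor C f" unfolding iso_mor_def using s assms by auto
  then show ?thesis unfolding isomorphic_def using assms by blast
qed

lemma iso_refl: "X \<in> Ob C \<Longrightarrow> isomorphic C X X"
  using isomorphicI id_hom id_l by metis

lemma iso_sym: "isomorphic C X Y \<Longrightarrow> isomorphic C Y X"
  by (metis isomorphicE isomorphicI)

lemma iso_trans:
  assumes "isomorphic C X Y" "isomorphic C Y Z" shows "isomorphic C X Z"
proof -
  obtain f g where fg: "f \<in> H X Y" "g \<in> H Y X" "cmp C g f = idm C X" "cmp C f g = idm C Y"
    using assms(1) isomorphicE by blast
  obtain f' g' where fg': "f' \<in> H Y Z" "g' \<in> H Z Y" "cmp C g' f' = idm C Y" "cmp C f' g' = idm C Z"
    using assms(2) isomorphicE by blast
  have 1: "cmp C (cmp C g g') (cmp C f' f) = idm C X"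
  proof -
    have "cmp C (cmp C g g') (cmp C f' f) = cmp C g (cmp C g' (cmp C f' f))"
      using assoc[OF cmp_hom[OF fg(1) fg'(1)] fg'(2) fg(2)] .
    also have "\<dots> = cmp C g (cmp C (cmp C g' f') f)" using assoc[OF fg(1) fg'(1) fg'(2)] by simp
    also have "\<dots> = idm C X" using fg fg' id_l by simp
    finally show ?thesis .
  qed
  have 2: "cmp C (cmp C f' f) (cmp C g g') = idm C Z"
  proof -
    have "cmp C (cmp C f' f) (cmp C g g') = cmp C f' (cmp C f (cmp C g g'))"
      using assoc[OF cmp_hom[OF fg'(2) fg(2)] fg(1) fg'(1)] .
    also have "\<dots> = cmp C f' (cmp C (cmp C f g) g')" using assoc[OF fg'(2) fg(2) fg(1)] by simp
    also have "\<dots> = idm C Z" using fg fg' id_l by simp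
    finally show ?thesis .
  qed
  show ?thesis using isomorphicI[OF cmp_hom cmp_hom 1 2] fg fg' by blast
qed

lemma iso_ob: "isomorphic C X Y \<Longrightarrow> X \<in> Ob C \<and> Y \<in> Ob C"
  by (metis isomorphicE hom_ob)

end

context TC begin

lemma shD:
  "\<forall>X\<in>Ob C. shO C X \<in> Ob C"
  "\<forall>X\<in>Ob C. \<forall>Y\<in>Ob C. \<forall>f\<in>H X Y. shM C f \<in> H (shO C X) (shO C Y)"
  "\<forall>X\<in>Ob C. shM C (idm C X) = idm C (shO C X)"
  "\<forall>f\<in>Mor C. \<forall>g\<in>Mor C. tgt C f = src C g \<longrightarrow> shM C (cmp C g f) = cmp C (shM C g) (shM C f)"
  "\<forall>X\<in>Ob C. \<forall>Y\<in>Ob C. \<forall>f\<in>H X Y. \<forall>g\<in>H X Y.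
         shM C (madd C f g) = madd C (shM C f) (shM C g)"
  "\<forall>X\<in>Ob C. \<forall>Y\<in>Ob C. bij_betw (shM C) (H X Y) (H (shO C X) (shO C Y))"
  "\<forall>Y\<in>Ob C. \<exists>X\<in>Ob C. isomorphic C (shO C X) Y"
  using shok unfolding shift_ok_def by blast+

lemma sh_ob: "X \<in> Ob C \<Longrightarrow> shO C X \<in> Ob C" using shD(1) by blast

lemma sh_hom: "f \<in> H X Y \<Longrightarrow> shM C f \<in> H (shO C X) (shO C Y)"
  using shD(2) hom_ob by blast

lemma sh_id: "X \<in> Ob C \<Longrightarrow> shM C (idm C X) = idm C (shO C X)" using shD(3) by blast

lemma sh_cmp: "f \<in> H X Y \<Longrightarrow> g \<in> H Y Z \<Longrightarrow> shM C (cmp C g f) = cmp C (shM C g) (shM C f)"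
proof -
  assume "f \<in> H X Y" "g \<in> H Y Z"
  then have "f \<in> Mor C" "g \<in> Mor C" "tgt C f = src C g" by (auto simp: hom_iff)
  then show ?thesis using shD(4) by blast
qed

lemma sh_add: "f \<in> H X Y \<Longrightarrow> g \<in> H X Y \<Longrightarrow> shM C (madd C f g) = madd C (shM C f) (shM C g)"
  using shD(5) hom_ob by blast

lemma sh_bij: "X \<in> Ob C \<Longrightarrow> Y \<in> Ob C \<Longrightarrow> bij_betw (shM C) (H X Y) (H (shO C X) (shO C Y))"
  using shD(6) by blast

lemma sh_inj: "f \<in> H X Y \<Longrightarrow> g \<in> H X Y \<Longrightarrow> shM C f = shM C g \<Longrightarrow> f = g"
  using sh_bij hom_ob unfolding bij_betw_def inj_on_def by metis

lemma sh_surj: "X \<in> Ob C \<Longrightarrow> Y \<in> Ob C \<Longrightarrow> g \<in> H (shO C X) (shO C Y) \<Longrightarrow> \<exists>f\<in>H X Y. shM C f = g"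
  using sh_bij unfolding bij_betw_def by (metis imageE)

lemma sh_ess: "Y \<in> Ob C \<Longrightarrow> \<exists>X\<in>Ob C. isomorphic C (shO C X) Y" using shD(7) by blast

lemma sh_zero: assumes "X \<in> Ob C" "Y \<in> Ob C"
  shows "shM C (mzero C X Y) = mzero C (shO C X) (shO C Y)"
proof -
  have z: "mzero C X Y \<in> H X Y" using assms zero_hom by blast
  have "shM C (mzero C X Y) = shM C (madd C (mzero C X Y) (mzero C X Y))" using add_zero z by simp
  also have "\<dots> = madd C (shM C (mzero C X Y)) (shM C (mzero C X Y))" using sh_add z by blast
  finally show ?thesis using self_zero sh_hom z by metis
qed

lemma sh_neg: assumes "f \<in> H X Y" shows "shM C (mneg C f) = mneg C (shM C f)"
proof -
  have XY: "X \<in> Ob C" "Y \<in> Ob C" using assms hom_ob by auto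
  have "madd C (shM C f) (shM C (mneg C f)) = shM C (mzero C X Y)"
    using sh_add[OF assms neg_hom[OF assms]] add_neg[OF assms] by simp
  also have "\<dots> = mzero C (shO C X) (shO C Y)" using sh_zero XY by blast
  finally show ?thesis using neg_unique sh_hom neg_hom assms by metis
qed

lemma sh_iso: assumes "isomorphic C X Y" shows "isomorphic C (shO C X) (shO C Y)"
proof -
  obtain f g where fg: "f \<in> H X Y" "g \<in> H Y X" "cmp C g f = idm C X" "cmp C f g = idm C Y"
    using assms isomorphicE by blast
  have XY: "X \<in> Ob C" "Y \<in> Ob C" using fg hom_ob by auto
  show ?thesis
    apply (rule isomorphicI[OF sh_hom[OF fg(1)] sh_hom[OF fg(2)]])
    using sh_cmp fg sh_id XY by metis+
qed

lemma sh_iso_refl: assumes "isomorphic C (shO C X) (shO C Y)" "X \<in> Ob C" "Y \<in> Ob C"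
  shows "isomorphic C X Y"
proof -
  obtain f' g' where fg: "f' \<in> H (shO C X) (shO C Y)" "g' \<in> H (shO C Y) (shO C X)"
    "cmp C g' f' = idm C (shO C X)" "cmp C f' g' = idm C (shO C Y)"
    using assms isomorphicE by blast
  obtain f where f: "f \<in> H X Y" "shM C f = f'" using sh_surj assms fg by blast
  obtain g where g: "g \<in> H Y X" "shM C g = g'" using sh_surj assms fg by blast
  have 1: "cmp C g f = idm C X"
    using sh_inj[OF cmp_hom[OF f(1) g(1)] id_hom[OF assms(2)]] sh_cmp[OF f(1) g(1)] f g fg sh_id assms
    by metis
  have 2: "cmp C f g = idm C Y"
    using sh_inj[OF cmp_hom[OF g(1) f(1)] id_hom[OF assms(3)]] sh_cmp[OF g(1) f(1)] f g fg sh_id assms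
    by metis
  show ?thesis using isomorphicI[OF f(1) g(1) 1 2] .
qed

lemma triD1: "\<forall>f g h. (f, g, h) \<in> dtri C \<longrightarrow> is_tri C f g h"
  using tri unfolding triangulated_def by (elim conjE) assumption

lemma triD2: "\<forall>f g h f' g' h' u v w. (f, g, h) \<in> dtri C \<and> is_tri C f' g' h' \<and>
        tri_mor C f g h f' g' h' u v w \<and> iso_mor C u \<and> iso_mor C v \<and> iso_mor C w
        \<longrightarrow> (f', g', h') \<in> dtri C"
  using tri unfolding triangulated_def by (elim conjE) assumption

lemma triD3: "\<forall>X\<in>Ob C. \<exists>Z. zero_obj C Z \<and> (idm C X, mzero C X Z, mzero C Z (shO C X)) \<in> dtri C"
  using tri unfolding triangulated_def by (elim conjE) assumption

lemma triD4: "\<forall>f\<in>Mor C. \<exists>g h. (f, g, h) \<in> dtri C"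
  using tri unfolding triangulated_def by (elim conjE) assumption

lemma triD5: "\<forall>f g h. (f, g, h) \<in> dtri C \<longrightarrow> (g, h, mneg C (shM C f)) \<in> dtri C"
  using tri unfolding triangulated_def by (elim conjE) assumption

lemma triD6: "\<forall>f g h f' g' h' u v. (f, g, h) \<in> dtri C \<and> (f', g', h') \<in> dtri C \<and>
        u \<in> H (src C f) (src C f') \<and> v \<in> H (src C g) (src C g') \<and>
        cmp C v f = cmp C f' u \<longrightarrow> (\<exists>w. tri_mor C f g h f' g' h' u v w)"
  using tri unfolding triangulated_def by (elim conjE) assumption

lemma triD7: "\<forall>f g p1 d1 p2 d2 p3 d3. f \<in> Mor C \<and> g \<in> Mor C \<and> tgt C f = src C g \<and>
        (f, p1, d1) \<in> dtri C \<and> (cmp C g f, p2, d2) \<in> dtri C \<and> (g, p3, d3) \<in> dtri C \<longrightarrow>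
        (\<exists>a b. a \<in> H (tgt C p1) (tgt C p2) \<and> b \<in> H (tgt C p2) (tgt C p3) \<and>
           (a, b, cmp C (shM C p1) d3) \<in> dtri C \<and>
           cmp C a p1 = cmp C p2 g \<and> cmp C d2 a = d1 \<and>
           cmp C b p2 = p3 \<and> cmp C d3 b = cmp C (shM C f) d2)"
  using tri unfolding triangulated_def by (elim conjE) assumption

lemmas triD = triD1 triD2 triD3 triD4 triD5 triD6 triD7

lemma dt_hom: assumes "(f, g, h) \<in> dtri C"
  shows "f \<in> H (src C f) (src C g)" "g \<in> H (src C g) (src C h)" "h \<in> H (src C h) (shO C (src C f))"
  using triD(1) assms unfolding is_tri_def by (auto simp: hom_iff)

lemma dt_ob: assumes "(f, g, h) \<in> dtri C"
  shows "src C f \<in> Ob C" "src C g \<in> Ob C" "src C h \<in> Ob C"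
  using dt_hom[OF assms] hom_ob by blast+

lemma dt_tgt: assumes "(f, g, h) \<in> dtri C"
  shows "tgt C f = src C g" "tgt C g = src C h" "tgt C h = shO C (src C f)"
  using dt_hom[OF assms] by (auto simp: hom_iff)

lemma rot: "(f, g, h) \<in> dtri C \<Longrightarrow> (g, h, mneg C (shM C f)) \<in> dtri C"
  using triD(5) by blast

lemma src_rot: assumes "(f, g, h) \<in> dtri C" shows "src C (mneg C (shM C f)) = shO C (src C f)"
  using neg_hom[OF sh_hom[OF dt_hom(1)[OF assms]]] by (simp add: hom_iff)

lemma triv: "X \<in> Ob C \<Longrightarrow> \<exists>Z. zero_obj C Z \<and> (idm C X, mzero C X Z, mzero C Z (shO C X)) \<in> dtri C"
  using triD(3) by blast

lemma ext: "f \<in> Mor C \<Longrightarrow> \<exists>g h. (f, g, h) \<in> dtri C"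
  using triD(4) by blast

lemma tr3: "(f, g, h) \<in> dtri C \<Longrightarrow> (f', g', h') \<in> dtri C \<Longrightarrow>
   u \<in> H (src C f) (src C f') \<Longrightarrow> v \<in> H (src C g) (src C g') \<Longrightarrow>
   cmp C v f = cmp C f' u \<Longrightarrow> \<exists>w. tri_mor C f g h f' g' h' u v w"
  using triD(6) by blast

lemma tr1: "(f, g, h) \<in> dtri C \<Longrightarrow> is_tri C f' g' h' \<Longrightarrow>
        tri_mor C f g h f' g' h' u v w \<Longrightarrow> iso_mor C u \<Longrightarrow> iso_mor C v \<Longrightarrow> iso_mor C w
        \<Longrightarrow> (f', g', h') \<in> dtri C"
  using triD(2) by blast

lemma tr4: "f \<in> Mor C \<Longrightarrow> g \<in> Mor C \<Longrightarrow> tgt C f = src C g \<Longrightarrow>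
        (f, p1, d1) \<in> dtri C \<Longrightarrow> (cmp C g f, p2, d2) \<in> dtri C \<Longrightarrow> (g, p3, d3) \<in> dtri C \<Longrightarrow>
        (\<exists>a b. a \<in> H (tgt C p1) (tgt C p2) \<and> b \<in> H (tgt C p2) (tgt C p3) \<and>
           (a, b, cmp C (shM C p1) d3) \<in> dtri C \<and>
           cmp C a p1 = cmp C p2 g \<and> cmp C d2 a = d1 \<and>
           cmp C b p2 = p3 \<and> cmp C d3 b = cmp C (shM C f) d2)"
  using triD(7) by blast

lemma iso_morI: "f \<in> H X Y \<Longrightarrow> g \<in> H Y X \<Longrightarrow> cmp C g f = idm C X \<Longrightarrow> cmp C f g = idm C Y \<Longrightarrow> iso_mor C f"
  unfolding iso_mor_def by (auto simp: hom_iff)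

lemma id_iso: "X \<in> Ob C \<Longrightarrow> iso_mor C (idm C X)"
  using iso_morI id_hom id_l by metis

lemma dt_zero: assumes d: "(f, g, h) \<in> dtri C"
  shows "cmp C g f = mzero C (src C f) (src C h)"
proof -
  let ?X = "src C f"
  have X: "?X \<in> Ob C" using dt_ob[OF d] by blast
  obtain Z where Z: "zero_obj C Z" and t: "(idm C ?X, mzero C ?X Z, mzero C Z (shO C ?X)) \<in> dtri C"
    using triv[OF X] by blast
  have ZO: "Z \<in> Ob C" using Z zero_obj_ob by blast
  have idh: "idm C ?X \<in> H ?X ?X" using id_hom X by blast
  have s0: "src C (idm C ?X) = ?X" "src C (mzero C ?X Z) = ?X" "src C (mzero C Z (shO C ?X)) = Z"
    using idh zero_hom[OF X ZO] zero_hom[OF ZO sh_ob[OF X]] by (auto simp: hom_iff)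
  have "cmp C f (idm C ?X) = cmp C f (idm C ?X)" ..
  then obtain w where w: "tri_mor C (idm C ?X) (mzero C ?X Z) (mzero C Z (shO C ?X)) f g h (idm C ?X) f w"
    using tr3[OF t d] idh dt_hom[OF d] s0 by (metis)
  then have "w \<in> H Z (src C h)" "cmp C w (mzero C ?X Z) = cmp C g f"
    unfolding tri_mor_def using s0 by auto
  then show ?thesis using cmp_zero_r X by metis
qed

lemma cov_exact:
  assumes d: "(f, g, h) \<in> dtri C" and a: "a \<in> H W (src C g)"
    and ga: "cmp C g a = mzero C W (src C h)"
  shows "\<exists>b\<in>H W (src C f). cmp C f b = a"
proof -
  let ?X = "src C f" and ?Y = "src C g" and ?Zf = "src C h"
  have W: "W \<in> Ob C" using a hom_ob by blast
  have obs: "?X \<in> Ob C" "?Y \<in> Ob C" "?Zf \<in> Ob C" using dt_ob[OF d] by auto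
  obtain Z where Z: "zero_obj C Z" and t: "(idm C W, mzero C W Z, mzero C Z (shO C W)) \<in> dtri C"
    using triv[OF W] by blast
  have ZO: "Z \<in> Ob C" using Z zero_obj_ob by blast
  have t2: "(mzero C W Z, mzero C Z (shO C W), mneg C (shM C (idm C W))) \<in> dtri C"
    using rot[OF t] .
  have d2: "(g, h, mneg C (shM C f)) \<in> dtri C" using rot[OF d] .
  have s0: "src C (mzero C W Z) = W" "src C (mzero C Z (shO C W)) = Z"
    using zero_hom[OF W ZO] zero_hom[OF ZO sh_ob[OF W]] by (auto simp: hom_iff)
  have v: "mzero C Z ?Zf \<in> H Z ?Zf" using zero_hom ZO obs by blast
  have c: "cmp C (mzero C Z ?Zf) (mzero C W Z) = cmp C g a"
    using ga cmp_zero_r[OF v W] by simp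
  obtain w where w: "tri_mor C (mzero C W Z) (mzero C Z (shO C W)) (mneg C (shM C (idm C W)))
      g h (mneg C (shM C f)) a (mzero C Z ?Zf) w"
    using tr3[OF t2 d2] a v s0 c by (metis)
  have srcn: "src C (mneg C (shM C (idm C W))) = shO C W"
    using neg_hom[OF sh_hom[OF id_hom[OF W]]] by (simp add: hom_iff)
  have fsh: "shM C f \<in> H (shO C ?X) (shO C ?Y)" using sh_hom dt_hom[OF d] by blast
  have srcn2: "src C (mneg C (shM C f)) = shO C ?X" using neg_hom[OF fsh] by (simp add: hom_iff)
  have wh: "w \<in> H (shO C W) (shO C ?X)" and eq: "cmp C (shM C a) (mneg C (shM C (idm C W))) = cmp C (mneg C (shM C f)) w"
    using w unfolding tri_mor_def using srcn srcn2 by auto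
  have shW: "shO C W \<in> Ob C" using sh_ob W by blast
  have ah: "shM C a \<in> H (shO C W) (shO C ?Y)" using sh_hom a by blast
  have "cmp C (shM C a) (mneg C (shM C (idm C W))) = mneg C (shM C a)"
    using cmp_neg_r[OF id_hom[OF shW] ah] sh_id[OF W] id_r[OF ah] by simp
  moreover have "cmp C (mneg C (shM C f)) w = mneg C (cmp C (shM C f) w)"
    using cmp_neg_l[OF wh fsh] .
  ultimately have e2: "shM C a = cmp C (shM C f) w"
    using eq neg_inj ah cmp_hom[OF wh fsh] by metis
  obtain b where b: "b \<in> H W ?X" "shM C b = w" using sh_surj[OF W obs(1) wh] by blast
  have "shM C (cmp C f b) = shM C a" using sh_cmp[OF b(1) dt_hom(1)[OF d]] b e2 by simp
  then have "cmp C f b = a" using sh_inj cmp_hom[OF b(1) dt_hom(1)[OF d]] a by blast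
  then show ?thesis using b by blast
qed

end

definition bp :: "('o, 'm) tricat \<Rightarrow> 'o \<Rightarrow> 'o \<Rightarrow> 'o \<Rightarrow> 'm \<Rightarrow> 'm \<Rightarrow> 'm \<Rightarrow> 'm \<Rightarrow> bool" where
  "bp C X Y S i1 i2 p1 p2 \<longleftrightarrow> X \<in> Ob C \<and> Y \<in> Ob C \<and> S \<in> Ob C \<and>
     i1 \<in> Defs.hom C X S \<and> i2 \<in> Defs.hom C Y S \<and> p1 \<in> Defs.hom C S X \<and> p2 \<in> Defs.hom C S Y \<and>
     cmp C p1 i1 = idm C X \<and> cmp C p2 i2 = idm C Y \<and>
     cmp C p2 i1 = mzero C X Y \<and> cmp C p1 i2 = mzero C Y X \<and>
     madd C (cmp C i1 p1) (cmp C i2 p2) = idm C S"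

lemma biprod_bp: "is_biprod C X Y S \<longleftrightarrow> (\<exists>i1 i2 p1 p2. bp C X Y S i1 i2 p1 p2)"
  unfolding is_biprod_def bp_def by blast

context TC begin

lemma cmpM: "f \<in> Mor C \<Longrightarrow> g \<in> Mor C \<Longrightarrow> tgt C f = src C g \<Longrightarrow> cmp C g f \<in> Mor C"
  using cmp_hom[of f "src C f" "tgt C f" g "tgt C g"] by (simp add: hom_iff)
lemma src_cmp: "f \<in> Mor C \<Longrightarrow> g \<in> Mor C \<Longrightarrow> tgt C f = src C g \<Longrightarrow> src C (cmp C g f) = src C f"
  using cmp_hom[of f "src C f" "tgt C f" g "tgt C g"] by (simp add: hom_iff)
lemma tgt_cmp: "f \<in> Mor C \<Longrightarrow> g \<in> Mor C \<Longrightarrow> tgt C f = src C g \<Longrightarrow> tgt C (cmp C g f) = tgt C g"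
  using cmp_hom[of f "src C f" "tgt C f" g "tgt C g"] by (simp add: hom_iff)
lemma idM: "X \<in> Ob C \<Longrightarrow> idm C X \<in> Mor C" using id_hom by (simp add: hom_iff)
lemma src_id: "X \<in> Ob C \<Longrightarrow> src C (idm C X) = X" using id_hom by (simp add: hom_iff)
lemma tgt_id: "X \<in> Ob C \<Longrightarrow> tgt C (idm C X) = X" using id_hom by (simp add: hom_iff)
lemma zM: "X \<in> Ob C \<Longrightarrow> Y \<in> Ob C \<Longrightarrow> mzero C X Y \<in> Mor C" using zero_hom by (simp add: hom_iff)
lemma src_z: "X \<in> Ob C \<Longrightarrow> Y \<in> Ob C \<Longrightarrow> src C (mzero C X Y) = X" using zero_hom by (simp add: hom_iff)
lemma tgt_z: "X \<in> Ob C \<Longrightarrow> Y \<in> Ob C \<Longrightarrow> tgt C (mzero C X Y) = Y" using zero_hom by (simp add: hom_iff)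
lemma addM: "f \<in> Mor C \<Longrightarrow> g \<in> Mor C \<Longrightarrow> src C f = src C g \<Longrightarrow> tgt C f = tgt C g \<Longrightarrow> madd C f g \<in> Mor C"
  using add_hom[of f "src C f" "tgt C f" g] by (simp add: hom_iff)
lemma src_add: "f \<in> Mor C \<Longrightarrow> g \<in> Mor C \<Longrightarrow> src C f = src C g \<Longrightarrow> tgt C f = tgt C g \<Longrightarrow> src C (madd C f g) = src C f"
  using add_hom[of f "src C f" "tgt C f" g] by (simp add: hom_iff)
lemma tgt_add: "f \<in> Mor C \<Longrightarrow> g \<in> Mor C \<Longrightarrow> src C f = src C g \<Longrightarrow> tgt C f = tgt C g \<Longrightarrow> tgt C (madd C f g) = tgt C f"
  using add_hom[of f "src C f" "tgt C f" g] by (simp add: hom_iff)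
lemma negM: "f \<in> Mor C \<Longrightarrow> mneg C f \<in> Mor C" using neg_hom[of f "src C f" "tgt C f"] by (simp add: hom_iff)
lemma src_neg: "f \<in> Mor C \<Longrightarrow> src C (mneg C f) = src C f" using neg_hom[of f "src C f" "tgt C f"] by (simp add: hom_iff)
lemma tgt_neg: "f \<in> Mor C \<Longrightarrow> tgt C (mneg C f) = tgt C f" using neg_hom[of f "src C f" "tgt C f"] by (simp add: hom_iff)
lemma assocM: "f \<in> Mor C \<Longrightarrow> g \<in> Mor C \<Longrightarrow> h \<in> Mor C \<Longrightarrow> tgt C f = src C g \<Longrightarrow> tgt C g = src C h \<Longrightarrow>
  cmp C (cmp C h g) f = cmp C h (cmp C g f)"
  using assoc[of f "src C f" "tgt C f" g "tgt C g" h "tgt C h"] by (simp add: hom_iff)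
lemma idlM: "f \<in> Mor C \<Longrightarrow> tgt C f = Y \<Longrightarrow> cmp C (idm C Y) f = f"
  using id_l[of f "src C f" "tgt C f"] by (simp add: hom_iff)
lemma idrM: "f \<in> Mor C \<Longrightarrow> src C f = X \<Longrightarrow> cmp C f (idm C X) = f"
  using id_r[of f "src C f" "tgt C f"] by (simp add: hom_iff)
lemma zlM: "f \<in> Mor C \<Longrightarrow> tgt C f = Y \<Longrightarrow> Z \<in> Ob C \<Longrightarrow> cmp C (mzero C Y Z) f = mzero C (src C f) Z"
  using cmp_zero_l[of f "src C f" "tgt C f" Z] by (simp add: hom_iff)
lemma zrM: "h \<in> Mor C \<Longrightarrow> src C h = Y \<Longrightarrow> X \<in> Ob C \<Longrightarrow> cmp C h (mzero C X Y) = mzero C X (tgt C h)"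
  using cmp_zero_r[of h "src C h" "tgt C h" X] by (simp add: hom_iff)
lemma distlM: "f \<in> Mor C \<Longrightarrow> g \<in> Mor C \<Longrightarrow> h \<in> Mor C \<Longrightarrow> src C f = src C g \<Longrightarrow> tgt C f = tgt C g \<Longrightarrow>
  tgt C f = src C h \<Longrightarrow> cmp C h (madd C f g) = madd C (cmp C h f) (cmp C h g)"
  using distl[of f "src C f" "tgt C f" g h "tgt C h"] by (simp add: hom_iff)
lemma distrM: "f \<in> Mor C \<Longrightarrow> g \<in> Mor C \<Longrightarrow> h \<in> Mor C \<Longrightarrow> src C g = src C h \<Longrightarrow> tgt C g = tgt C h \<Longrightarrow>
  tgt C f = src C g \<Longrightarrow> cmp C (madd C g h) f = madd C (cmp C g f) (cmp C h f)"
  using distr[of f "src C f" "tgt C f" g "tgt C g" h] by (simp add: hom_iff)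
lemma addzM: "f \<in> Mor C \<Longrightarrow> src C f = X \<Longrightarrow> tgt C f = Y \<Longrightarrow> madd C f (mzero C X Y) = f"
  using add_zero[of f X Y] by (simp add: hom_iff)
lemma addzlM: "f \<in> Mor C \<Longrightarrow> src C f = X \<Longrightarrow> tgt C f = Y \<Longrightarrow> madd C (mzero C X Y) f = f"
  using add_zero_l[of f X Y] by (simp add: hom_iff)
lemma neglM: "f \<in> Mor C \<Longrightarrow> h \<in> Mor C \<Longrightarrow> tgt C f = src C h \<Longrightarrow> cmp C (mneg C h) f = mneg C (cmp C h f)"
  using cmp_neg_l[of f "src C f" "tgt C f" h "tgt C h"] by (simp add: hom_iff)
lemma negrM: "f \<in> Mor C \<Longrightarrow> h \<in> Mor C \<Longrightarrow> tgt C f = src C h \<Longrightarrow> cmp C h (mneg C f) = mneg C (cmp C h f)"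
  using cmp_neg_r[of f "src C f" "tgt C f" h "tgt C h"] by (simp add: hom_iff)
lemma negzM: "X \<in> Ob C \<Longrightarrow> Y \<in> Ob C \<Longrightarrow> mneg C (mzero C X Y) = mzero C X Y" using neg_zero by blast

lemmas M = cmpM src_cmp tgt_cmp idM src_id tgt_id zM src_z tgt_z addM src_add tgt_add negM src_neg tgt_neg
  assocM idlM idrM zlM zrM distlM distrM addzM addzlM neglM negrM negzM

lemma eq_ext: "cmp C p i = r \<Longrightarrow> z \<in> Mor C \<Longrightarrow> i \<in> Mor C \<Longrightarrow> p \<in> Mor C \<Longrightarrow> tgt C i = src C p \<Longrightarrow>
   tgt C z = src C i \<Longrightarrow> cmp C p (cmp C i z) = cmp C r z"
  using assocM by metis

lemma bpD: assumes "bp C X Y S i1 i2 p1 p2"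
  shows "X \<in> Ob C" "Y \<in> Ob C" "S \<in> Ob C"
   "i1 \<in> Mor C" "src C i1 = X" "tgt C i1 = S" "i2 \<in> Mor C" "src C i2 = Y" "tgt C i2 = S"
   "p1 \<in> Mor C" "src C p1 = S" "tgt C p1 = X" "p2 \<in> Mor C" "src C p2 = S" "tgt C p2 = Y"
   "cmp C p1 i1 = idm C X" "cmp C p2 i2 = idm C Y"
   "cmp C p2 i1 = mzero C X Y" "cmp C p1 i2 = mzero C Y X"
   "madd C (cmp C i1 p1) (cmp C i2 p2) = idm C S"
  using assms unfolding bp_def by (auto simp: hom_iff)

lemma bpE: assumes "bp C X Y S i1 i2 p1 p2"
  shows "z \<in> Mor C \<Longrightarrow> tgt C z = X \<Longrightarrow> cmp C p1 (cmp C i1 z) = z"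
    "z \<in> Mor C \<Longrightarrow> tgt C z = Y \<Longrightarrow> cmp C p2 (cmp C i2 z) = z"
    "z \<in> Mor C \<Longrightarrow> tgt C z = X \<Longrightarrow> cmp C p2 (cmp C i1 z) = mzero C (src C z) Y"
    "z \<in> Mor C \<Longrightarrow> tgt C z = Y \<Longrightarrow> cmp C p1 (cmp C i2 z) = mzero C (src C z) X"
  using bpD[OF assms] eq_ext[of p1 i1 "idm C X" z] eq_ext[of p2 i2 "idm C Y" z]
     eq_ext[of p2 i1 "mzero C X Y" z] eq_ext[of p1 i2 "mzero C Y X" z]
  by (simp_all add: M)

lemma bpI: "X \<in> Ob C \<Longrightarrow> Y \<in> Ob C \<Longrightarrow> S \<in> Ob C \<Longrightarrow>
   i1 \<in> Mor C \<Longrightarrow> src C i1 = X \<Longrightarrow> tgt C i1 = S \<Longrightarrow> i2 \<in> Mor C \<Longrightarrow> src C i2 = Y \<Longrightarrow> tgt C i2 = S \<Longrightarrow>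
   p1 \<in> Mor C \<Longrightarrow> src C p1 = S \<Longrightarrow> tgt C p1 = X \<Longrightarrow> p2 \<in> Mor C \<Longrightarrow> src C p2 = S \<Longrightarrow> tgt C p2 = Y \<Longrightarrow>
   cmp C p1 i1 = idm C X \<Longrightarrow> cmp C p2 i2 = idm C Y \<Longrightarrow>
   cmp C p2 i1 = mzero C X Y \<Longrightarrow> cmp C p1 i2 = mzero C Y X \<Longrightarrow>
   madd C (cmp C i1 p1) (cmp C i2 p2) = idm C S \<Longrightarrow> bp C X Y S i1 i2 p1 p2"
  unfolding bp_def by (auto simp: hom_iff)

lemma bp_sym: "bp C X Y S i1 i2 p1 p2 \<Longrightarrow> bp C Y X S i2 i1 p2 p1"
  unfolding bp_def using add_comm cmp_hom by metis

lemma bp_ext_out: assumes b: "bp C X Y S i1 i2 p1 p2" and f: "f \<in> H S T" and g: "g \<in> H S T"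
  and e1: "cmp C f i1 = cmp C g i1" and e2: "cmp C f i2 = cmp C g i2"
  shows "f = g"
proof -
  note d = bpD[OF b]
  have fm: "f \<in> Mor C" "src C f = S" "tgt C f = T" "g \<in> Mor C" "src C g = S" "tgt C g = T" using f g by (auto simp: hom_iff)
  have "f = cmp C f (madd C (cmp C i1 p1) (cmp C i2 p2))" using d(1-19) fm d(20) by (simp add: M)
  also have "\<dots> = madd C (cmp C (cmp C f i1) p1) (cmp C (cmp C f i2) p2)" using d(1-19) fm by (simp add: M)
  also have "\<dots> = madd C (cmp C (cmp C g i1) p1) (cmp C (cmp C g i2) p2)" using e1 e2 by simp
  also have "\<dots> = cmp C g (madd C (cmp C i1 p1) (cmp C i2 p2))" using d(1-19) fm by (simp add: M)
  also have "\<dots> = g" using d fm by (simp add: M)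
  finally show ?thesis .
qed

lemma bp_ext_in: assumes b: "bp C X Y S i1 i2 p1 p2" and f: "f \<in> H T S" and g: "g \<in> H T S"
  and e1: "cmp C p1 f = cmp C p1 g" and e2: "cmp C p2 f = cmp C p2 g"
  shows "f = g"
proof -
  note d = bpD[OF b]
  have fm: "f \<in> Mor C" "src C f = T" "tgt C f = S" "g \<in> Mor C" "src C g = T" "tgt C g = S" using f g by (auto simp: hom_iff)
  have "f = cmp C (madd C (cmp C i1 p1) (cmp C i2 p2)) f" using d(1-19) fm d(20) by (simp add: M)
  also have "\<dots> = madd C (cmp C i1 (cmp C p1 f)) (cmp C i2 (cmp C p2 f))" using d(1-19) fm by (simp add: M)
  also have "\<dots> = madd C (cmp C i1 (cmp C p1 g)) (cmp C i2 (cmp C p2 g))" using e1 e2 by simp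
  also have "\<dots> = cmp C (madd C (cmp C i1 p1) (cmp C i2 p2)) g" using d(1-19) fm by (simp add: M)
  also have "\<dots> = g" using d fm by (simp add: M)
  finally show ?thesis .
qed

lemma bp_zero: assumes Z: "zero_obj C Z" and X: "X \<in> Ob C"
  shows "bp C X Z X (idm C X) (mzero C Z X) (idm C X) (mzero C X Z)"
proof -
  have ZO: "Z \<in> Ob C" using Z zero_obj_ob by blast
  show ?thesis using ZO X zero_obj_id[OF Z] by (intro bpI) (simp_all add: M)
qed

end

context TC begin

lemma addnegM: "f \<in> Mor C \<Longrightarrow> madd C f (mneg C f) = mzero C (src C f) (tgt C f)"
  using add_neg[of f "src C f" "tgt C f"] by (simp add: hom_iff)
lemma shM: "f \<in> Mor C \<Longrightarrow> shM C f \<in> Mor C" using sh_hom[of f "src C f" "tgt C f"] by (simp add: hom_iff)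
lemma src_sh: "f \<in> Mor C \<Longrightarrow> src C (shM C f) = shO C (src C f)" using sh_hom[of f "src C f" "tgt C f"] by (simp add: hom_iff)
lemma tgt_sh: "f \<in> Mor C \<Longrightarrow> tgt C (shM C f) = shO C (tgt C f)" using sh_hom[of f "src C f" "tgt C f"] by (simp add: hom_iff)

lemmas M2 = M addnegM

lemma split_zero:
  assumes d: "(a, b, h) \<in> dtri C" and h0: "h = mzero C (src C h) (shO C (src C a))"
  shows "\<exists>s r. bp C (src C a) (src C h) (src C b) a s r b"
proof -
  define Y where "Y = src C a"
  define C0 where "C0 = src C b"
  define A where "A = src C h"
  have ah: "a \<in> H Y C0" and bh: "b \<in> H C0 A" and hh: "h \<in> H A (shO C Y)"
    using dt_hom[OF d] unfolding Y_def C0_def A_def by auto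
  have ob: "Y \<in> Ob C" "C0 \<in> Ob C" "A \<in> Ob C" using ah bh hom_ob by auto
  have am: "a \<in> Mor C" "src C a = Y" "tgt C a = C0" using ah by (auto simp: hom_iff)
  have bm: "b \<in> Mor C" "src C b = C0" "tgt C b = A" using bh by (auto simp: hom_iff)
  have ba: "cmp C b a = mzero C Y A" using dt_zero[OF d] unfolding Y_def A_def .
  have d1: "(b, h, mneg C (shM C a)) \<in> dtri C" using rot[OF d] .
  have sr1: "src C (mneg C (shM C a)) = shO C Y" using src_rot[OF d] unfolding Y_def .
  have "cmp C h (idm C A) = mzero C A (src C (mneg C (shM C a)))"
    using id_r[OF hh] h0 sr1 unfolding A_def Y_def by simp
  then obtain s where sh: "s \<in> H A C0" and bs: "cmp C b s = idm C A"
    using cov_exact[OF d1, of "idm C A" A] id_hom ob unfolding A_def C0_def by auto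
  have sm: "s \<in> Mor C" "src C s = A" "tgt C s = C0" using sh by (auto simp: hom_iff)
  let ?x = "madd C (idm C C0) (mneg C (cmp C s b))"
  have xh: "?x \<in> H C0 C0" using add_hom[OF id_hom[OF ob(2)] neg_hom[OF cmp_hom[OF bh sh]]] .
  have bsz: "\<And>z. z \<in> Mor C \<Longrightarrow> tgt C z = A \<Longrightarrow> cmp C b (cmp C s z) = z"
    using eq_ext[OF bs] sm bm by (simp add: M)
  have bx: "cmp C b ?x = mzero C C0 A"
    using am bm sm ob bsz by (simp add: M2)
  then obtain r where rh: "r \<in> H C0 Y" and ar: "cmp C a r = ?x"
    using cov_exact[OF d, of ?x C0] xh unfolding C0_def A_def Y_def by auto
  have rm: "r \<in> Mor C" "src C r = C0" "tgt C r = Y" using rh by (auto simp: hom_iff)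
  have mono: "y = mzero C T Y" if yh: "y \<in> H T Y" and ay: "cmp C a y = mzero C T C0" for y T
  proof -
    have T: "T \<in> Ob C" using yh hom_ob by blast
    have d2: "(h, mneg C (shM C a), mneg C (shM C (b))) \<in> dtri C" using rot[OF d1] .
    have sr2: "src C (mneg C (shM C b)) = shO C C0" using bm by (simp add: src_neg src_sh shM)
    have yh1: "shM C y \<in> H (shO C T) (src C (mneg C (shM C a)))" using sh_hom[OF yh] sr1 by simp
    have "cmp C (mneg C (shM C a)) (shM C y) = mneg C (shM C (cmp C a y))"
      using cmp_neg_l[OF sh_hom[OF yh] sh_hom[OF ah]] sh_cmp[OF yh ah] by simp
    also have "\<dots> = mzero C (shO C T) (src C (mneg C (shM C b)))"
      using ay sh_zero T ob sr2 neg_zero sh_ob by simp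
    finally obtain b' where b'h: "b' \<in> H (shO C T) (src C h)" and hb: "cmp C h b' = shM C y"
      using cov_exact[OF d2 yh1] by blast
    have h0': "h = mzero C A (shO C Y)" using h0 unfolding A_def Y_def .
    have b'A: "b' \<in> H (shO C T) A" using b'h unfolding A_def .
    have "cmp C h b' = mzero C (shO C T) (shO C Y)"
      using cmp_zero_l[OF b'A sh_ob[OF ob(1)]] h0' by simp
    then have "shM C y = shM C (mzero C T Y)" using hb sh_zero T ob by simp
    then show ?thesis using sh_inj yh zero_hom T ob by blast
  qed
  have arz: "\<And>z. z \<in> Mor C \<Longrightarrow> tgt C z = C0 \<Longrightarrow> cmp C a (cmp C r z) = cmp C ?x z"
    using eq_ext[OF ar] rm am by (simp add: M)
  have baz: "\<And>z. z \<in> Mor C \<Longrightarrow> tgt C z = Y \<Longrightarrow> cmp C b (cmp C a z) = mzero C (src C z) A"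
    using eq_ext[OF ba] am bm ob by (simp add: M)
  have "cmp C a (madd C (cmp C r a) (mneg C (idm C Y))) = mzero C Y C0"
    using am bm sm rm ob arz baz ba by (simp add: M2)
  then have "madd C (cmp C r a) (mneg C (idm C Y)) = mzero C Y Y"
    using mono[OF add_hom[OF cmp_hom[OF ah rh] neg_hom[OF id_hom[OF ob(1)]]]] by blast
  then have ra: "cmp C r a = idm C Y" using sub_zero_eq[OF cmp_hom[OF ah rh] id_hom[OF ob(1)]] by blast
  have "cmp C a (cmp C r s) = mzero C A C0"
    using am bm sm rm ob arz bsz bs by (simp add: M2)
  then have rs: "cmp C r s = mzero C A Y" using mono[OF cmp_hom[OF sh rh]] by blast
  have sum: "madd C (cmp C a r) (cmp C s b) = idm C C0"
    using ar sub_cancel2[OF id_hom[OF ob(2)] cmp_hom[OF bh sh]] by simp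
  have "bp C Y A C0 a s r b"
    using ob am bm sm rm ra bs ba rs sum by (intro bpI) auto
  then show ?thesis unfolding Y_def A_def C0_def by blast
qed

lemma split_dt:
  assumes b: "bp C X Y S i1 i2 p1 p2"
  shows "(i1, p2, mzero C Y (shO C X)) \<in> dtri C"
proof -
  note bd = bpD[OF b]
  obtain g h where d: "(i1, g, h) \<in> dtri C" using ext bd by blast
  have sg: "src C g = S" using dt_tgt(1)[OF d] bd by simp
  define Z where "Z = src C h"
  have gh: "g \<in> H S Z" and hh: "h \<in> H Z (shO C X)"
    using dt_hom[OF d] sg bd unfolding Z_def by auto
  have gm: "g \<in> Mor C" "src C g = S" "tgt C g = Z" and hm: "h \<in> Mor C" "src C h = Z" "tgt C h = shO C X"
    using gh hh by (auto simp: hom_iff)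
  have ZO: "Z \<in> Ob C" using gh hom_ob by blast
  have XS: "shO C X \<in> Ob C" "shO C S \<in> Ob C" using sh_ob bd by auto
  have d2: "(h, mneg C (shM C i1), mneg C (shM C g)) \<in> dtri C" using rot[OF rot[OF d]] .
  have "cmp C (mneg C (shM C i1)) h = mzero C Z (shO C S)"
    using dt_zero[OF d2] gm hm unfolding Z_def by (simp add: src_neg src_sh shM)
  moreover have "cmp C (mneg C (shM C i1)) h = mneg C (cmp C (shM C i1) h)"
    using cmp_neg_l[OF hh sh_hom[of i1 X S]] bd by (simp add: hom_iff)
  ultimately have e: "mneg C (cmp C (shM C i1) h) = mzero C Z (shO C S)" by simp
  have ihh: "cmp C (shM C i1) h \<in> H Z (shO C S)" using cmp_hom[OF hh sh_hom[of i1 X S]] bd by (simp add: hom_iff)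
  have ih: "cmp C (shM C i1) h = mzero C Z (shO C S)"
    using neg_neg[OF ihh] e neg_zero[OF ZO XS(2)] by metis
  have "h = cmp C (shM C (cmp C p1 i1)) h" using bd hm sh_id idlM by simp
  also have "\<dots> = cmp C (shM C p1) (cmp C (shM C i1) h)"
    using sh_cmp[of i1 X S p1 X] bd hm by (simp add: hom_iff M shM src_sh tgt_sh)
  also have "\<dots> = mzero C Z (shO C X)" using ih bd ZO by (simp add: M shM src_sh tgt_sh)
  finally have h0z: "h = mzero C Z (shO C X)" .
  have h0: "h = mzero C (src C h) (shO C (src C i1))" using h0z bd unfolding Z_def by simp
  obtain s r where b2: "bp C X Z S i1 s r g" using split_zero[OF d h0] sg bd unfolding Z_def by auto
  note bd2 = bpD[OF b2]
  let ?w = "cmp C p2 s" and ?w' = "cmp C g i2"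
  have wh: "?w \<in> H Z Y" and w'h: "?w' \<in> H Y Z" using bd bd2 by (auto simp: hom_iff M)
  have gi1: "cmp C g i1 = mzero C X Z" using dt_zero[OF d] bd unfolding Z_def by simp
  have giz: "\<And>z. z \<in> Mor C \<Longrightarrow> tgt C z = X \<Longrightarrow> cmp C g (cmp C i1 z) = mzero C (src C z) Z"
    using eq_ext[OF gi1] bd gm ZO by (simp add: M)
  have "p2 = cmp C p2 (madd C (cmp C i1 r) (cmp C s g))" using bd2(20) bd by (simp add: M)
  also have "\<dots> = cmp C ?w g" using bd(1-19) bd2(1-19) bpE[OF b] by (simp add: M)
  finally have wg: "cmp C ?w g = p2" by simp
  have ww': "cmp C ?w ?w' = idm C Y"
    using assoc[of i2 Y S g Z ?w Y] wg bd gh wh by (simp add: hom_iff)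
  have "g = cmp C g (madd C (cmp C i1 p1) (cmp C i2 p2))" using bd(20) bd gm by (simp add: M)
  also have "\<dots> = cmp C g (cmp C i2 p2)" using bd(1-19) gm giz ZO by (simp add: M)
  finally have gip: "cmp C g (cmp C i2 p2) = g" by simp
  have "cmp C ?w' ?w = cmp C (cmp C g (cmp C i2 p2)) s" using bd gm bd2 by (simp add: M)
  then have w'w: "cmp C ?w' ?w = idm C Z" using gip bd2 by simp
  have tm: "tri_mor C i1 g h i1 p2 (mzero C Y (shO C X)) (idm C X) (idm C S) ?w"
    unfolding tri_mor_def using bd gm wh wg ZO XS sh_id h0z
    by (auto simp: hom_iff M)
  have it: "is_tri C i1 p2 (mzero C Y (shO C X))" unfolding is_tri_def using bd XS by (simp add: M)
  show ?thesis
    using tr1[OF d it tm id_iso[OF bd(1)] id_iso[OF bd(3)] iso_morI[OF wh w'h w'w ww']] .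
qed

end

context TC begin

lemma bp_iso_obj:
  assumes b: "bp C X Y S i1 i2 p1 p2" and ph: "\<phi> \<in> H S S'" and ps: "\<psi> \<in> H S' S"
    and e1: "cmp C \<psi> \<phi> = idm C S" and e2: "cmp C \<phi> \<psi> = idm C S'"
  shows "bp C X Y S' (cmp C \<phi> i1) (cmp C \<phi> i2) (cmp C p1 \<psi>) (cmp C p2 \<psi>)"
proof -
  note d = bpD[OF b]
  have m: "\<phi> \<in> Mor C" "src C \<phi> = S" "tgt C \<phi> = S'" "\<psi> \<in> Mor C" "src C \<psi> = S'" "tgt C \<psi> = S"
    using ph ps by (auto simp: hom_iff)
  have S': "S' \<in> Ob C" using ph hom_ob by blast
  have z: "\<And>z. z \<in> Mor C \<Longrightarrow> tgt C z = S \<Longrightarrow> cmp C \<psi> (cmp C \<phi> z) = z"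
    using eq_ext[OF e1] m d by (simp add: M)
  have "madd C (cmp C (cmp C \<phi> i1) (cmp C p1 \<psi>)) (cmp C (cmp C \<phi> i2) (cmp C p2 \<psi>))
      = cmp C \<phi> (cmp C (madd C (cmp C i1 p1) (cmp C i2 p2)) \<psi>)"
    using d(1-19) m by (simp add: M)
  also have "\<dots> = idm C S'" using d m e2 by (simp add: M)
  finally have s: "madd C (cmp C (cmp C \<phi> i1) (cmp C p1 \<psi>)) (cmp C (cmp C \<phi> i2) (cmp C p2 \<psi>)) = idm C S'" .
  show ?thesis
    apply (rule bpI)
    using d(1-19) m S' z s by (simp_all add: M)
qed

lemma bp_iso_left:
  assumes b: "bp C X Y S i1 i2 p1 p2" and ph: "\<phi> \<in> H X' X" and ps: "\<psi> \<in> H X X'"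
    and e1: "cmp C \<psi> \<phi> = idm C X'" and e2: "cmp C \<phi> \<psi> = idm C X"
  shows "bp C X' Y S (cmp C i1 \<phi>) i2 (cmp C \<psi> p1) p2"
proof -
  note d = bpD[OF b]
  have m: "\<phi> \<in> Mor C" "src C \<phi> = X'" "tgt C \<phi> = X" "\<psi> \<in> Mor C" "src C \<psi> = X" "tgt C \<psi> = X'"
    using ph ps by (auto simp: hom_iff)
  have X': "X' \<in> Ob C" using ph hom_ob by blast
  have z: "\<And>z. z \<in> Mor C \<Longrightarrow> tgt C z = X \<Longrightarrow> cmp C \<phi> (cmp C \<psi> z) = z"
    using eq_ext[OF e2] m d by (simp add: M)
  have "madd C (cmp C (cmp C i1 \<phi>) (cmp C \<psi> p1)) (cmp C i2 p2) = madd C (cmp C i1 p1) (cmp C i2 p2)"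
    using d(1-19) m z by (simp add: M)
  then have s: "madd C (cmp C (cmp C i1 \<phi>) (cmp C \<psi> p1)) (cmp C i2 p2) = idm C S" using d by simp
  show ?thesis
    apply (rule bpI)
    using d(1-19) m X' z s e1 bpE[OF b] by (simp_all add: M)
qed

lemma bp_unique:
  assumes b: "bp C X Y S i1 i2 p1 p2" and b': "bp C X Y S' j1 j2 q1 q2"
  shows "isomorphic C S S'"
proof -
  note d = bpD[OF b] and d' = bpD[OF b']
  let ?f = "madd C (cmp C j1 p1) (cmp C j2 p2)" and ?g = "madd C (cmp C i1 q1) (cmp C i2 q2)"
  have fh: "?f \<in> H S S'" and gh: "?g \<in> H S' S" using d(1-19) d'(1-19) by (simp_all add: hom_iff M)
  have "cmp C ?g ?f = idm C S"
    apply (rule bp_ext_out[OF b cmp_hom[OF fh gh] id_hom[OF d(3)]])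
    using d(1-19) d'(1-19) bpE[OF b] bpE[OF b'] by (simp_all add: M)
  moreover have "cmp C ?f ?g = idm C S'"
    apply (rule bp_ext_out[OF b' cmp_hom[OF gh fh] id_hom[OF d'(3)]])
    using d(1-19) d'(1-19) bpE[OF b] bpE[OF b'] by (simp_all add: M)
  ultimately show ?thesis using isomorphicI[OF fh gh] by blast
qed

lemma bp_assoc:
  assumes b1: "bp C X Y S1 a1 a2 q1 q2" and b2: "bp C S1 W T b1 b2 r1 r2" and b3: "bp C Y W S2 c1 c2 s1 s2"
  shows "bp C X S2 T (cmp C b1 a1) (madd C (cmp C b1 (cmp C a2 s1)) (cmp C b2 s2))
                (cmp C q1 r1) (madd C (cmp C c1 (cmp C q2 r1)) (cmp C c2 r2))"
proof -
  note d1 = bpD[OF b1] and d2 = bpD[OF b2] and d3 = bpD[OF b3]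
  note e = bpE[OF b1] bpE[OF b2] bpE[OF b3]
  let ?I1 = "cmp C b1 a1" and ?I2 = "madd C (cmp C b1 (cmp C a2 s1)) (cmp C b2 s2)"
  let ?P1 = "cmp C q1 r1" and ?P2 = "madd C (cmp C c1 (cmp C q2 r1)) (cmp C c2 r2)"
  let ?L = "madd C (cmp C ?I1 ?P1) (cmp C ?I2 ?P2)"
  have Lh: "?L \<in> H T T" using d1(1-19) d2(1-19) d3(1-19) by (simp add: hom_iff M)
  have "cmp C ?L b1 = cmp C (idm C T) b1"
    apply (rule bp_ext_out[OF b1])
    using d1(1-19) d2(1-19) d3(1-19) e by (simp_all add: hom_iff M)
  moreover have "cmp C ?L b2 = cmp C (idm C T) b2"
    using d1(1-19) d2(1-19) d3(1-19) e d3(20) by (simp add: M)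
  ultimately have L: "?L = idm C T"
    using bp_ext_out[OF b2 Lh id_hom[OF d2(3)]] by blast
  show ?thesis
    apply (rule bpI)
    using d1(1-19) d2(1-19) d3(1-19) e L d3(20) by (simp_all add: M)
qed

lemma bp_sh: assumes b: "bp C X Y S i1 i2 p1 p2"
  shows "bp C (shO C X) (shO C Y) (shO C S) (shM C i1) (shM C i2) (shM C p1) (shM C p2)"
proof -
  note d = bpD[OF b]
  have h: "i1 \<in> H X S" "i2 \<in> H Y S" "p1 \<in> H S X" "p2 \<in> H S Y" using d by (auto simp: hom_iff)
  have s: "shM C (madd C (cmp C i1 p1) (cmp C i2 p2)) = madd C (cmp C (shM C i1) (shM C p1)) (cmp C (shM C i2) (shM C p2))"
    using sh_add[OF cmp_hom[OF h(3) h(1)] cmp_hom[OF h(4) h(2)]] sh_cmp h by simp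
  show ?thesis
    apply (rule bpI)
    using d h sh_ob sh_hom[OF h(1)] sh_hom[OF h(2)] sh_hom[OF h(3)] sh_hom[OF h(4)]
      sh_cmp[OF h(1) h(3)] sh_cmp[OF h(2) h(4)] sh_cmp[OF h(1) h(4)] sh_cmp[OF h(2) h(3)]
      sh_id sh_zero s
    by (simp_all add: hom_iff)
qed

lemma biprod_ob: "is_biprod C X Y S \<Longrightarrow> X \<in> Ob C \<and> Y \<in> Ob C \<and> S \<in> Ob C"
  unfolding is_biprod_def by blast

lemma biprod_sym: assumes "is_biprod C X Y S" shows "is_biprod C Y X S"
proof -
  obtain i1 i2 p1 p2 where b1: "bp C X Y S i1 i2 p1 p2" using assms(1) unfolding biprod_bp by blast
  show ?thesis using bp_sym[OF b1] unfolding biprod_bp by blast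
qed

lemma biprod_exists: "X \<in> Ob C \<Longrightarrow> Y \<in> Ob C \<Longrightarrow> \<exists>S. is_biprod C X Y S"
  using addi unfolding additive_def by blast

lemma biprod_unique: assumes "is_biprod C X Y S" "is_biprod C X Y S'" shows "isomorphic C S S'"
proof -
  obtain i1 i2 p1 p2 where b1: "bp C X Y S i1 i2 p1 p2" using assms(1) unfolding biprod_bp by blast
  obtain j1 j2 q1 q2 where b2: "bp C X Y S' j1 j2 q1 q2" using assms(2) unfolding biprod_bp by blast
  show ?thesis using bp_unique[OF b1 b2] .
qed

lemma biprod_iso: assumes "is_biprod C X Y S" "isomorphic C S S'" shows "is_biprod C X Y S'"
proof -
  obtain i1 i2 p1 p2 where b: "bp C X Y S i1 i2 p1 p2" using assms(1) unfolding biprod_bp by blast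
  obtain f g where "f \<in> H S S'" "g \<in> H S' S" "cmp C g f = idm C S" "cmp C f g = idm C S'"
    using assms isomorphicE by blast
  then have "bp C X Y S' (cmp C f i1) (cmp C f i2) (cmp C p1 g) (cmp C p2 g)" by (rule bp_iso_obj[OF b])
  then show ?thesis unfolding biprod_bp by blast
qed

lemma biprod_iso_left: assumes "is_biprod C X Y S" "isomorphic C X' X" shows "is_biprod C X' Y S"
proof -
  obtain i1 i2 p1 p2 where b: "bp C X Y S i1 i2 p1 p2" using assms(1) unfolding biprod_bp by blast
  obtain f g where "f \<in> H X' X" "g \<in> H X X'" "cmp C g f = idm C X'" "cmp C f g = idm C X"
    using assms isomorphicE by blast
  then have "bp C X' Y S (cmp C i1 f) i2 (cmp C g p1) p2" by (rule bp_iso_left[OF b])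
  then show ?thesis unfolding biprod_bp by blast
qed

lemma biprod_iso_right: assumes "is_biprod C X Y S" "isomorphic C Y' Y" shows "is_biprod C X Y' S"
  using biprod_iso_left[OF biprod_sym[OF assms(1)] assms(2)] biprod_sym by blast

lemma biprod_zero: assumes "zero_obj C Z" "X \<in> Ob C" shows "is_biprod C X Z X"
proof -
  have "bp C X Z X (idm C X) (mzero C Z X) (idm C X) (mzero C X Z)" using bp_zero[OF assms] .
  then show ?thesis unfolding biprod_bp by blast
qed

lemma biprod_sh: assumes "is_biprod C X Y S" shows "is_biprod C (shO C X) (shO C Y) (shO C S)"
proof -
  obtain i1 i2 p1 p2 where b: "bp C X Y S i1 i2 p1 p2" using assms(1) unfolding biprod_bp by blast
  show ?thesis using bp_sh[OF b] unfolding biprod_bp by blast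
qed

lemma biprod_assoc: assumes "is_biprod C X Y S1" "is_biprod C S1 W T" "is_biprod C Y W S2"
  shows "is_biprod C X S2 T"
proof -
  obtain i1 i2 p1 p2 where b1: "bp C X Y S1 i1 i2 p1 p2" using assms(1) unfolding biprod_bp by blast
  obtain j1 j2 q1 q2 where b2: "bp C S1 W T j1 j2 q1 q2" using assms(2) unfolding biprod_bp by blast
  obtain k1 k2 r1 r2 where b3: "bp C Y W S2 k1 k2 r1 r2" using assms(3) unfolding biprod_bp by blast
  show ?thesis using bp_assoc[OF b1 b2 b3] unfolding biprod_bp by blast
qed

lemma biprod_cong: assumes "is_biprod C X Y S" "is_biprod C X' Y' S'" "isomorphic C X X'" "isomorphic C Y Y'"
  shows "isomorphic C S S'"
proof -
  have "is_biprod C X' Y' S" using biprod_iso_left[OF biprod_iso_right[OF assms(1) iso_sym[OF assms(4)]] iso_sym[OF assms(3)]] .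
  then show ?thesis using biprod_unique assms(2) by blast
qed

lemma split_dt': "is_biprod C X Y S \<Longrightarrow> \<exists>f g h. (f, g, h) \<in> dtri C \<and> src C f = X \<and> src C g = S \<and> src C h = Y"
proof -
  assume "is_biprod C X Y S"
  then obtain i1 i2 p1 p2 where b: "bp C X Y S i1 i2 p1 p2" unfolding biprod_bp by blast
  note d = bpD[OF b]
  have "(i1, p2, mzero C Y (shO C X)) \<in> dtri C" using split_dt[OF b] .
  moreover have "src C (mzero C Y (shO C X)) = Y" using d sh_ob by (simp add: M)
  ultimately show ?thesis using d by blast
qed

lemma tsD: assumes "tri_sub C D"
  shows "D \<subseteq> Ob C" "\<exists>Z\<in>D. zero_obj C Z" "\<And>X Y. X \<in> D \<Longrightarrow> isomorphic C X Y \<Longrightarrow> Y \<in> D"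
    "\<And>X. X \<in> Ob C \<Longrightarrow> X \<in> D \<longleftrightarrow> shO C X \<in> D"
    "\<And>f g h. (f, g, h) \<in> dtri C \<Longrightarrow> src C f \<in> D \<Longrightarrow> src C g \<in> D \<Longrightarrow> src C h \<in> D"
  using assms unfolding tri_sub_def using iso_ob by blast+

lemma ts_ext: assumes D: "tri_sub C D" and d: "(f, g, h) \<in> dtri C" and "src C f \<in> D" "src C h \<in> D"
  shows "src C g \<in> D"
proof -
  have d2: "(h, mneg C (shM C f), mneg C (shM C g)) \<in> dtri C" using rot[OF rot[OF d]] .
  have "src C (mneg C (shM C f)) = shO C (src C f)" using src_rot[OF d] .
  moreover have "src C (mneg C (shM C g)) = shO C (src C g)" using src_rot[OF rot[OF d]] .
  moreover have "shO C (src C f) \<in> D" using tsD(4)[OF D] dt_ob[OF d] assms by blast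
  ultimately have "shO C (src C g) \<in> D" using tsD(5)[OF D d2] assms by simp
  then show ?thesis using tsD(4)[OF D] dt_ob[OF d] by blast
qed

lemma ts_biprod: assumes D: "tri_sub C D" and b: "is_biprod C X Y S" and "X \<in> D" "Y \<in> D" shows "S \<in> D"
  using split_dt'[OF b] ts_ext[OF D] assms by metis

lemma ts_biprod_cancel: assumes D: "tri_sub C D" and b: "is_biprod C X Y S" and "S \<in> D" "Y \<in> D" shows "X \<in> D"
  using split_dt'[OF biprod_sym[OF b]] tsD(5)[OF D] assms by metis

end

locale TCB = TC +
  fixes B
  assumes dense: "dense_sub C B"
begin

lemma Bts: "tri_sub C B" using dense unfolding dense_sub_def by blast
lemma Bsub: "B \<subseteq> Ob C" using tsD(1)[OF Bts] .
lemma Bdense: "U \<in> Ob C \<Longrightarrow> \<exists>V\<in>Ob C. \<exists>S\<in>B. is_biprod C U V S"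
  using dense unfolding dense_sub_def by blast
lemma B_iso: "X \<in> B \<Longrightarrow> isomorphic C X Y \<Longrightarrow> Y \<in> B" using tsD(3)[OF Bts] by blast

definition Z0 where "Z0 = (SOME Z. Z \<in> B \<and> zero_obj C Z)"
lemma Z0: "Z0 \<in> B" "zero_obj C Z0" "Z0 \<in> Ob C"
proof -
  have "\<exists>Z. Z \<in> B \<and> zero_obj C Z" using tsD(2)[OF Bts] by blast
  then have "Z0 \<in> B \<and> zero_obj C Z0" unfolding Z0_def by (rule someI_ex)
  then show "Z0 \<in> B" "zero_obj C Z0" "Z0 \<in> Ob C" using Bsub by auto
qed

definition bsum where "bsum X Y = (SOME S. is_biprod C X Y S)"
lemma bsum: "X \<in> Ob C \<Longrightarrow> Y \<in> Ob C \<Longrightarrow> is_biprod C X Y (bsum X Y)"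
  unfolding bsum_def using biprod_exists by (metis someI_ex)
lemma bsum_ob: "X \<in> Ob C \<Longrightarrow> Y \<in> Ob C \<Longrightarrow> bsum X Y \<in> Ob C"
  using bsum biprod_ob by blast
lemma bsum_iso: "is_biprod C X Y S \<Longrightarrow> isomorphic C S (bsum X Y)"
  using bsum biprod_unique biprod_ob by blast
lemma bsum_comm: "X \<in> Ob C \<Longrightarrow> Y \<in> Ob C \<Longrightarrow> isomorphic C (bsum X Y) (bsum Y X)"
  using bsum biprod_sym bsum_iso by blast
lemma bsum_cong: assumes i1: "isomorphic C X X'" and i2: "isomorphic C Y Y'"
  shows "isomorphic C (bsum X Y) (bsum X' Y')"
proof -
  have o: "X \<in> Ob C" "X' \<in> Ob C" "Y \<in> Ob C" "Y' \<in> Ob C" using iso_ob i1 i2 by auto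
  show ?thesis using biprod_cong[OF bsum[OF o(1,3)] bsum[OF o(2,4)] i1 i2] .
qed
lemma bsum_assoc: assumes "X \<in> Ob C" "Y \<in> Ob C" "W \<in> Ob C"
  shows "isomorphic C (bsum (bsum X Y) W) (bsum X (bsum Y W))"
proof -
  have "is_biprod C X (bsum Y W) (bsum (bsum X Y) W)"
    using biprod_assoc[OF bsum[OF assms(1,2)] bsum[OF bsum_ob[OF assms(1,2)] assms(3)] bsum[OF assms(2,3)]] .
  then show ?thesis using bsum_iso by blast
qed
lemma bsum_zero: "X \<in> Ob C \<Longrightarrow> isomorphic C (bsum X Z0) X"
  using bsum_iso biprod_zero Z0 iso_sym by blast
lemma bsum_zero_l: "X \<in> Ob C \<Longrightarrow> isomorphic C (bsum Z0 X) X"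
  using bsum_iso biprod_zero biprod_sym Z0 iso_sym by blast

lemma interchange: assumes ob: "A \<in> Ob C" "B' \<in> Ob C" "X \<in> Ob C" "D \<in> Ob C"
  shows "isomorphic C (bsum (bsum A B') (bsum X D)) (bsum (bsum A X) (bsum B' D))"
proof -
  note o = bsum_ob ob
  have 1: "isomorphic C (bsum (bsum A B') (bsum X D)) (bsum A (bsum B' (bsum X D)))"
    using bsum_assoc o by auto
  have 2: "isomorphic C (bsum B' (bsum X D)) (bsum (bsum B' X) D)"
    using bsum_assoc o iso_sym by auto
  have 3: "isomorphic C (bsum (bsum B' X) D) (bsum (bsum X B') D)"
    using bsum_cong bsum_comm iso_refl o by auto
  have 4: "isomorphic C (bsum (bsum X B') D) (bsum X (bsum B' D))"
    using bsum_assoc o by auto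
  have 5: "isomorphic C (bsum A (bsum X (bsum B' D))) (bsum (bsum A X) (bsum B' D))"
    using bsum_assoc o iso_sym by auto
  have "isomorphic C (bsum B' (bsum X D)) (bsum X (bsum B' D))" using 2 3 4 iso_trans by blast
  then have "isomorphic C (bsum A (bsum B' (bsum X D))) (bsum A (bsum X (bsum B' D)))"
    using bsum_cong iso_refl ob by blast
  then show ?thesis using 1 5 iso_trans by blast
qed

lemma B_bsum: "X \<in> B \<Longrightarrow> Y \<in> B \<Longrightarrow> bsum X Y \<in> B"
  using ts_biprod[OF Bts] bsum Bsub by blast
lemma B_cancel: "X \<in> Ob C \<Longrightarrow> Y \<in> B \<Longrightarrow> bsum X Y \<in> B \<Longrightarrow> X \<in> B"
  using ts_biprod_cancel[OF Bts] bsum Bsub by blast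

definition rel where "rel X Y \<longleftrightarrow> X \<in> Ob C \<and> Y \<in> Ob C \<and>
   (\<exists>P\<in>B. \<exists>Q\<in>B. isomorphic C (bsum X P) (bsum Y Q))"

lemma rel_refl: "X \<in> Ob C \<Longrightarrow> rel X X"
  unfolding rel_def using Z0 iso_refl bsum_ob by blast
lemma rel_sym: "rel X Y \<Longrightarrow> rel Y X"
  unfolding rel_def using iso_sym by blast
lemma rel_iso: "isomorphic C X Y \<Longrightarrow> rel X Y"
  unfolding rel_def using Z0 bsum_cong iso_refl iso_ob by blast

lemma rel_trans: assumes r1: "rel X Y" and r2: "rel Y Z" shows "rel X Z"
proof -
  obtain P Q where PQ: "P \<in> B" "Q \<in> B" and i1: "isomorphic C (bsum X P) (bsum Y Q)" and ob1: "X \<in> Ob C" "Y \<in> Ob C"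
    using r1 unfolding rel_def by blast
  obtain P' Q' where PQ': "P' \<in> B" "Q' \<in> B" and i2: "isomorphic C (bsum Y P') (bsum Z Q')" and ob2: "Z \<in> Ob C"
    using r2 unfolding rel_def by blast
  have ob: "P \<in> Ob C" "Q \<in> Ob C" "P' \<in> Ob C" "Q' \<in> Ob C" using PQ PQ' Bsub by auto
  note o = ob ob1 ob2 bsum_ob
  have a: "isomorphic C (bsum X (bsum P P')) (bsum (bsum X P) P')" using bsum_assoc o iso_sym by auto
  have b: "isomorphic C (bsum (bsum X P) P') (bsum (bsum Y Q) P')" using bsum_cong i1 iso_refl o by auto
  have c: "isomorphic C (bsum (bsum Y Q) P') (bsum Y (bsum Q P'))" using bsum_assoc o by auto
  have d: "isomorphic C (bsum Y (bsum Q P')) (bsum Y (bsum P' Q))" using bsum_cong bsum_comm iso_refl o by auto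
  have e: "isomorphic C (bsum Y (bsum P' Q)) (bsum (bsum Y P') Q)" using bsum_assoc o iso_sym by auto
  have f: "isomorphic C (bsum (bsum Y P') Q) (bsum (bsum Z Q') Q)" using bsum_cong i2 iso_refl o by auto
  have g: "isomorphic C (bsum (bsum Z Q') Q) (bsum Z (bsum Q' Q))" using bsum_assoc o by auto
  have "isomorphic C (bsum X (bsum P P')) (bsum Z (bsum Q' Q))" using a b c d e f g iso_trans by meson
  moreover have "bsum P P' \<in> B" "bsum Q' Q \<in> B" using B_bsum PQ PQ' by auto
  ultimately show ?thesis unfolding rel_def using ob1 ob2 by blast
qed

lemma rel_bsum: assumes r1: "rel X X'" and r2: "rel Y Y'" shows "rel (bsum X Y) (bsum X' Y')"
proof -
  obtain P Q where PQ: "P \<in> B" "Q \<in> B" and i1: "isomorphic C (bsum X P) (bsum X' Q)" and ob1: "X \<in> Ob C" "X' \<in> Ob C"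
    using r1 unfolding rel_def by blast
  obtain P' Q' where PQ': "P' \<in> B" "Q' \<in> B" and i2: "isomorphic C (bsum Y P') (bsum Y' Q')" and ob2: "Y \<in> Ob C" "Y' \<in> Ob C"
    using r2 unfolding rel_def by blast
  have ob: "P \<in> Ob C" "Q \<in> Ob C" "P' \<in> Ob C" "Q' \<in> Ob C" using PQ PQ' Bsub by auto
  note o = ob ob1 ob2 bsum_ob
  have a: "isomorphic C (bsum (bsum X Y) (bsum P P')) (bsum (bsum X P) (bsum Y P'))" using interchange o by auto
  have b: "isomorphic C (bsum (bsum X P) (bsum Y P')) (bsum (bsum X' Q) (bsum Y' Q'))" using bsum_cong i1 i2 by auto
  have c: "isomorphic C (bsum (bsum X' Q) (bsum Y' Q')) (bsum (bsum X' Y') (bsum Q Q'))" using interchange o by auto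
  have "isomorphic C (bsum (bsum X Y) (bsum P P')) (bsum (bsum X' Y') (bsum Q Q'))" using a b c iso_trans by meson
  moreover have "bsum P P' \<in> B" "bsum Q Q' \<in> B" using B_bsum PQ PQ' by auto
  ultimately show ?thesis unfolding rel_def using o by blast
qed

lemma rel_zero: "X \<in> Ob C \<Longrightarrow> rel X Z0 \<longleftrightarrow> X \<in> B"
proof
  assume X: "X \<in> Ob C" and r: "rel X Z0"
  then obtain P Q where PQ: "P \<in> B" "Q \<in> B" and i: "isomorphic C (bsum X P) (bsum Z0 Q)"
    unfolding rel_def by blast
  have "isomorphic C (bsum Z0 Q) Q" using bsum_zero_l PQ Bsub by blast
  then have "bsum X P \<in> B" using i iso_trans iso_sym B_iso PQ by metis
  then show "X \<in> B" using B_cancel X PQ by blast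
next
  assume X: "X \<in> Ob C" and XB: "X \<in> B"
  have "isomorphic C (bsum X Z0) (bsum Z0 X)" using bsum_comm X Z0 by blast
  then show "rel X Z0" unfolding rel_def using X Z0 XB by blast
qed

definition cls where "cls X = {Y \<in> Ob C. rel X Y}"

lemma cls_eq: "X \<in> Ob C \<Longrightarrow> Y \<in> Ob C \<Longrightarrow> cls X = cls Y \<longleftrightarrow> rel X Y"
proof
  assume "X \<in> Ob C" "Y \<in> Ob C" "cls X = cls Y"
  then have "Y \<in> cls X" unfolding cls_def using rel_refl by blast
  then show "rel X Y" unfolding cls_def by blast
next
  assume "X \<in> Ob C" "Y \<in> Ob C" "rel X Y"
  then show "cls X = cls Y" unfolding cls_def using rel_sym rel_trans by blast
qed

definition rep where "rep a = (SOME X. X \<in> Ob C \<and> a = cls X)"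
lemma rep: "X \<in> Ob C \<Longrightarrow> rep (cls X) \<in> Ob C \<and> rel (rep (cls X)) X"
proof -
  assume X: "X \<in> Ob C"
  have "\<exists>Y. Y \<in> Ob C \<and> cls X = cls Y" using X by blast
  then have "rep (cls X) \<in> Ob C \<and> cls X = cls (rep (cls X))" unfolding rep_def by (rule someI_ex)
  then show ?thesis using cls_eq X by metis
qed

definition G where
  "G = \<lparr>carrier = cls ` Ob C, mult = (\<lambda>a b. cls (bsum (rep a) (rep b))), one = cls Z0\<rparr>"

lemma G_carrier: "carrier G = cls ` Ob C" unfolding G_def by simp
lemma G_one: "one G = cls Z0" unfolding G_def by simp
lemma G_mult: "X \<in> Ob C \<Longrightarrow> Y \<in> Ob C \<Longrightarrow> mult G (cls X) (cls Y) = cls (bsum X Y)"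
proof -
  assume X: "X \<in> Ob C" and Y: "Y \<in> Ob C"
  have "rel (bsum (rep (cls X)) (rep (cls Y))) (bsum X Y)" using rel_bsum rep X Y by blast
  then have "cls (bsum (rep (cls X)) (rep (cls Y))) = cls (bsum X Y)"
    using cls_eq bsum_ob rep X Y by metis
  then show ?thesis unfolding G_def by simp
qed

lemma cls_one: "X \<in> Ob C \<Longrightarrow> cls X = one G \<longleftrightarrow> X \<in> B"
  using G_one cls_eq rel_zero Z0 by metis

lemma G_cg: "comm_group G"
proof (rule comm_groupI)
  show "\<And>x y. x \<in> carrier G \<Longrightarrow> y \<in> carrier G \<Longrightarrow> x \<otimes>\<^bsub>G\<^esub> y \<in> carrier G"
    using G_carrier G_mult bsum_ob by auto
  show "\<one>\<^bsub>G\<^esub> \<in> carrier G" using G_carrier G_one Z0 by auto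
  show "\<And>x y z. x \<in> carrier G \<Longrightarrow> y \<in> carrier G \<Longrightarrow> z \<in> carrier G \<Longrightarrow>
      x \<otimes>\<^bsub>G\<^esub> y \<otimes>\<^bsub>G\<^esub> z = x \<otimes>\<^bsub>G\<^esub> (y \<otimes>\<^bsub>G\<^esub> z)"
  proof -
    fix x y z assume "x \<in> carrier G" "y \<in> carrier G" "z \<in> carrier G"
    then obtain X Y Z where o: "X \<in> Ob C" "Y \<in> Ob C" "Z \<in> Ob C" and e: "x = cls X" "y = cls Y" "z = cls Z"
      using G_carrier by auto
    have "cls (bsum (bsum X Y) Z) = cls (bsum X (bsum Y Z))"
      using cls_eq rel_iso bsum_assoc o bsum_ob by metis
    then show "x \<otimes>\<^bsub>G\<^esub> y \<otimes>\<^bsub>G\<^esub> z = x \<otimes>\<^bsub>G\<^esub> (y \<otimes>\<^bsub>G\<^esub> z)"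
      using e G_mult o bsum_ob by simp
  qed
  show "\<And>x y. x \<in> carrier G \<Longrightarrow> y \<in> carrier G \<Longrightarrow> x \<otimes>\<^bsub>G\<^esub> y = y \<otimes>\<^bsub>G\<^esub> x"
  proof -
    fix x y assume "x \<in> carrier G" "y \<in> carrier G"
    then obtain X Y where o: "X \<in> Ob C" "Y \<in> Ob C" and e: "x = cls X" "y = cls Y"
      using G_carrier by auto
    have "cls (bsum X Y) = cls (bsum Y X)" using cls_eq rel_iso bsum_comm o bsum_ob by metis
    then show "x \<otimes>\<^bsub>G\<^esub> y = y \<otimes>\<^bsub>G\<^esub> x" using e G_mult o by simp
  qed
  show "\<And>x. x \<in> carrier G \<Longrightarrow> \<one>\<^bsub>G\<^esub> \<otimes>\<^bsub>G\<^esub> x = x"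
  proof -
    fix x assume "x \<in> carrier G"
    then obtain X where o: "X \<in> Ob C" and e: "x = cls X" using G_carrier by auto
    have "cls (bsum Z0 X) = cls X" using cls_eq rel_iso bsum_zero_l o bsum_ob Z0 by metis
    then show "\<one>\<^bsub>G\<^esub> \<otimes>\<^bsub>G\<^esub> x = x" using e G_mult o G_one Z0 by simp
  qed
  show "\<And>x. x \<in> carrier G \<Longrightarrow> \<exists>y\<in>carrier G. y \<otimes>\<^bsub>G\<^esub> x = \<one>\<^bsub>G\<^esub>"
  proof -
    fix x assume "x \<in> carrier G"
    then obtain X where o: "X \<in> Ob C" and e: "x = cls X" using G_carrier by auto
    obtain V S where V: "V \<in> Ob C" "S \<in> B" "is_biprod C X V S" using Bdense o by blast
    have "bsum V X \<in> B" using B_iso V bsum_iso biprod_sym by blast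
    then have "cls (bsum V X) = one G" using cls_one bsum_ob V o by blast
    then show "\<exists>y\<in>carrier G. y \<otimes>\<^bsub>G\<^esub> x = \<one>\<^bsub>G\<^esub>" using e G_mult o V G_carrier by auto
  qed
qed

end

sublocale TCB \<subseteq> Gg: comm_group G by (rule G_cg)


context TC begin

lemma step1:
  assumes d: "(f, p, e0) \<in> dtri C" and W: "W \<in> Ob C"
  shows "\<exists>f' q e. (f', q, e) \<in> dtri C \<and> src C f' = src C f \<and>
            is_biprod C (src C p) W (src C q) \<and> is_biprod C (src C e0) W (src C e)"
proof -
  define X where "X = src C f"
  define Y where "Y = src C p"
  define Z where "Z = src C e0"
  have fh: "f \<in> H X Y" and ph: "p \<in> H Y Z" and eh: "e0 \<in> H Z (shO C X)"
    using dt_hom[OF d] unfolding X_def Y_def Z_def by auto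
  have fm: "f \<in> Mor C" "src C f = X" "tgt C f = Y" and pm: "p \<in> Mor C" "src C p = Y" "tgt C p = Z"
    using fh ph by (auto simp: hom_iff)
  have ob: "X \<in> Ob C" "Y \<in> Ob C" "Z \<in> Ob C" using fh ph hom_ob by auto
  obtain S where "is_biprod C Y W S" using biprod_exists ob W by blast
  then obtain i1 i2 p1 p2 where b: "bp C Y W S i1 i2 p1 p2" unfolding biprod_bp by blast
  note bd = bpD[OF b]
  have sp: "(i1, p2, mzero C W (shO C Y)) \<in> dtri C" using split_dt[OF b] .
  have im: "cmp C i1 f \<in> Mor C" using fm bd by (simp add: M)
  obtain q e where d2: "(cmp C i1 f, q, e) \<in> dtri C" using ext[OF im] by blast
  obtain a b' where ab: "a \<in> H (tgt C p) (tgt C q)" "b' \<in> H (tgt C q) (tgt C p2)"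
     "(a, b', cmp C (shM C p) (mzero C W (shO C Y))) \<in> dtri C"
    using tr4[OF fm(1) bd(4) _ d d2 sp] fm bd by auto
  have shp: "cmp C (shM C p) (mzero C W (shO C Y)) = mzero C W (shO C Z)"
    using cmp_zero_r[OF sh_hom[OF ph] W] .
  have d3: "(a, b', mzero C W (shO C Z)) \<in> dtri C" using ab(3) shp by simp
  have sa: "src C a = Z" using ab(1) pm by (simp add: hom_iff)
  have sb: "src C b' = tgt C q" using ab(2) by (simp add: hom_iff)
  have sz: "src C (mzero C W (shO C Z)) = W" using W ob sh_ob by (simp add: M)
  have "mzero C W (shO C Z) = mzero C (src C (mzero C W (shO C Z))) (shO C (src C a))" using sz sa by simp
  then obtain s r where "bp C (src C a) (src C (mzero C W (shO C Z))) (src C b') a s r b'"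
    using split_zero[OF d3] by blast
  then have bz: "is_biprod C Z W (tgt C q)" using sa sz sb unfolding biprod_bp by auto
  have tq: "tgt C q = src C e" using dt_tgt(2)[OF d2] .
  have sq: "src C q = S" using dt_tgt(1)[OF d2] fm bd by (simp add: M)
  have sf: "src C (cmp C i1 f) = X" using fm bd by (simp add: M)
  show ?thesis
    apply (rule exI[of _ "cmp C i1 f"], rule exI[of _ q], rule exI[of _ e])
    using d2 sf sq tq bz \<open>is_biprod C Y W S\<close> unfolding X_def Y_def Z_def by simp
qed

end

context TCB begin

lemma cls_carrier: "X \<in> Ob C \<Longrightarrow> cls X \<in> carrier G" using G_carrier by simp

lemma cls_biprod: "is_biprod C X Y S \<Longrightarrow> cls S = cls X \<otimes>\<^bsub>G\<^esub> cls Y"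
proof -
  assume b: "is_biprod C X Y S"
  then have o: "X \<in> Ob C" "Y \<in> Ob C" "S \<in> Ob C" using biprod_ob by auto
  have "cls S = cls (bsum X Y)" using cls_eq rel_iso bsum_iso[OF b] o bsum_ob by metis
  then show ?thesis using G_mult o by simp
qed

lemma cancel_r: "a \<in> carrier G \<Longrightarrow> b \<in> carrier G \<Longrightarrow> w \<in> carrier G \<Longrightarrow>
   a \<otimes>\<^bsub>G\<^esub> w = b \<otimes>\<^bsub>G\<^esub> w \<Longrightarrow> a = b"
  by (metis Gg.inv_closed Gg.m_assoc Gg.r_inv Gg.r_one)

lemma rel_shift: assumes X: "X \<in> Ob C" and Y: "Y \<in> Ob C" and r: "rel (shO C X) (shO C Y)"
  shows "rel X Y"
proof -
  obtain P Q where PQ: "P \<in> B" "Q \<in> B" and i: "isomorphic C (bsum (shO C X) P) (bsum (shO C Y) Q)"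
    using r unfolding rel_def by blast
  have PQo: "P \<in> Ob C" "Q \<in> Ob C" using PQ Bsub by auto
  obtain P0 where P0: "P0 \<in> Ob C" "isomorphic C (shO C P0) P" using sh_ess PQo by blast
  obtain Q0 where Q0: "Q0 \<in> Ob C" "isomorphic C (shO C Q0) Q" using sh_ess PQo by blast
  have P0B: "P0 \<in> B" using B_iso[OF PQ(1) iso_sym[OF P0(2)]] tsD(4)[OF Bts P0(1)] by blast
  have Q0B: "Q0 \<in> B" using B_iso[OF PQ(2) iso_sym[OF Q0(2)]] tsD(4)[OF Bts Q0(1)] by blast
  have b1: "is_biprod C (shO C X) P (shO C (bsum X P0))"
    using biprod_iso_right[OF biprod_sh[OF bsum[OF X P0(1)]] iso_sym[OF P0(2)]] .
  have b2: "is_biprod C (shO C Y) Q (shO C (bsum Y Q0))"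
    using biprod_iso_right[OF biprod_sh[OF bsum[OF Y Q0(1)]] iso_sym[OF Q0(2)]] .
  have "isomorphic C (shO C (bsum X P0)) (shO C (bsum Y Q0))"
    using bsum_iso[OF b1] bsum_iso[OF b2] i iso_trans iso_sym by meson
  then have "isomorphic C (bsum X P0) (bsum Y Q0)"
    using sh_iso_refl bsum_ob X Y P0 Q0 by blast
  then show ?thesis unfolding rel_def using X Y P0B Q0B by blast
qed

lemma step2: assumes d: "(f, g, h) \<in> dtri C" and E: "src C h \<in> B"
  shows "cls (src C f) = cls (src C g)"
proof -
  define X where "X = src C f"
  define Y where "Y = src C g"
  have ob: "X \<in> Ob C" "Y \<in> Ob C" using dt_ob[OF d] unfolding X_def Y_def by auto
  have d2: "(h, mneg C (shM C f), mneg C (shM C g)) \<in> dtri C" using rot[OF rot[OF d]] .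
  have s2: "src C (mneg C (shM C f)) = shO C X" "src C (mneg C (shM C g)) = shO C Y"
    using src_rot[OF d] src_rot[OF rot[OF d]] unfolding X_def Y_def by auto
  have sob: "shO C X \<in> Ob C" "shO C Y \<in> Ob C" using sh_ob ob by auto
  obtain W D where WD: "W \<in> Ob C" "D \<in> B" "is_biprod C (shO C Y) W D" using Bdense sob by blast
  obtain f' q e where t: "(f', q, e) \<in> dtri C" "src C f' = src C h"
    "is_biprod C (shO C X) W (src C q)" "is_biprod C (shO C Y) W (src C e)"
    using step1[OF d2 WD(1)] s2 by auto
  have eB: "src C e \<in> B" using B_iso[OF WD(2)] biprod_unique[OF WD(3) t(4)] by blast
  have qB: "src C q \<in> B" using ts_ext[OF Bts t(1)] t(2) E eB by simp
  have c1: "cls (shO C X) \<otimes>\<^bsub>G\<^esub> cls W = \<one>\<^bsub>G\<^esub>"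
    using cls_biprod[OF t(3)] cls_one qB Bsub by auto
  have c2: "cls (shO C Y) \<otimes>\<^bsub>G\<^esub> cls W = \<one>\<^bsub>G\<^esub>"
    using cls_biprod[OF t(4)] cls_one eB Bsub by auto
  have "cls (shO C X) = cls (shO C Y)" using cancel_r c1 c2 cls_carrier sob WD(1) by metis
  then have "rel (shO C X) (shO C Y)" using cls_eq sob by blast
  then have "rel X Y" using rel_shift ob by blast
  then show ?thesis using cls_eq ob unfolding X_def Y_def by blast
qed

lemma add_tri: assumes d: "(f, g, h) \<in> dtri C"
  shows "cls (src C g) = cls (src C f) \<otimes>\<^bsub>G\<^esub> cls (src C h)"
proof -
  have ob: "src C f \<in> Ob C" "src C g \<in> Ob C" "src C h \<in> Ob C" using dt_ob[OF d] by auto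
  obtain W D where WD: "W \<in> Ob C" "D \<in> B" "is_biprod C (src C h) W D" using Bdense ob by blast
  obtain f' q e where t: "(f', q, e) \<in> dtri C" "src C f' = src C f"
    "is_biprod C (src C g) W (src C q)" "is_biprod C (src C h) W (src C e)"
    using step1[OF d WD(1)] by blast
  have eB: "src C e \<in> B" using B_iso[OF WD(2)] biprod_unique[OF WD(3) t(4)] by blast
  have e1: "cls (src C f) = cls (src C g) \<otimes>\<^bsub>G\<^esub> cls W"
    using step2[OF t(1) eB] t(2) cls_biprod[OF t(3)] by simp
  have e2: "cls (src C h) \<otimes>\<^bsub>G\<^esub> cls W = \<one>\<^bsub>G\<^esub>"
    using cls_biprod[OF t(4)] cls_one eB Bsub by auto
  have car: "cls (src C f) \<in> carrier G" "cls (src C g) \<in> carrier G" "cls (src C h) \<in> carrier G" "cls W \<in> carrier G"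
    using cls_carrier ob WD by auto
  have "(cls (src C f) \<otimes>\<^bsub>G\<^esub> cls (src C h)) \<otimes>\<^bsub>G\<^esub> cls W = cls (src C g) \<otimes>\<^bsub>G\<^esub> cls W"
    using e1 e2 car by (simp add: Gg.m_assoc)
  then show ?thesis using cancel_r car by (metis Gg.m_closed)
qed

end

lemma sum_fun_apply: "(sum f A) x = sum (\<lambda>a. f a x) A"
  by (induct A rule: infinite_finite_induct) auto

interpretation qm: module "(\<lambda>(c::rat) (v::'a \<Rightarrow> rat) x. c * v x)"
  by standard (auto simp: fun_eq_iff algebra_simps)

lemma qspan_span: "qspan S = qm.span S"
  unfolding qspan_def qm.span_explicit
  by (auto simp: sum_fun_apply fun_eq_iff)

definition idelta :: "'a \<Rightarrow> 'a \<Rightarrow> int" where "idelta X = (\<lambda>Y. if Y = X then 1 else 0)"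

context TCB begin

definition fsi where "fsi u \<longleftrightarrow> finite {x. u x \<noteq> (0::int)} \<and> {x. u x \<noteq> 0} \<subseteq> Ob C"
definition Phi where "Phi u = finprod G (\<lambda>X. cls X [^]\<^bsub>G\<^esub> u X) {x. u x \<noteq> (0::int)}"

lemma pow_car: "X \<in> Ob C \<Longrightarrow> cls X [^]\<^bsub>G\<^esub> (k::int) \<in> carrier G"
  using cls_carrier by simp

lemma Phi_sup: assumes u: "fsi u" and A: "finite A" "{x. u x \<noteq> 0} \<subseteq> A" "A \<subseteq> Ob C"
  shows "Phi u = finprod G (\<lambda>X. cls X [^]\<^bsub>G\<^esub> u X) A"
  unfolding Phi_def
  by (rule Gg.finprod_mono_neutral_cong_left) (use A pow_car in auto)

lemma Phi_car: "fsi u \<Longrightarrow> Phi u \<in> carrier G"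
  unfolding Phi_def fsi_def using pow_car by (intro Gg.finprod_closed) auto

lemma finprod_ipow: assumes "finite A" "f \<in> A \<rightarrow> carrier G"
  shows "finprod G (\<lambda>x. f x [^]\<^bsub>G\<^esub> (k::int)) A = finprod G f A [^]\<^bsub>G\<^esub> k"
  using assms
proof (induct A rule: finite_induct)
  case empty then show ?case by simp
next
  case (insert a A)
  have fa: "f a \<in> carrier G" and fA: "f \<in> A \<rightarrow> carrier G" using insert by auto
  have "finprod G (\<lambda>x. f x [^]\<^bsub>G\<^esub> k) (insert a A) = f a [^]\<^bsub>G\<^esub> k \<otimes>\<^bsub>G\<^esub> finprod G (\<lambda>x. f x [^]\<^bsub>G\<^esub> k) A"
    using insert fa fA by (intro Gg.finprod_insert) auto
  also have "\<dots> = f a [^]\<^bsub>G\<^esub> k \<otimes>\<^bsub>G\<^esub> finprod G f A [^]\<^bsub>G\<^esub> k" using insert fA by simp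
  also have "\<dots> = (f a \<otimes>\<^bsub>G\<^esub> finprod G f A) [^]\<^bsub>G\<^esub> k"
    using Gg.int_pow_distrib fa fA by (simp add: Gg.finprod_closed)
  also have "\<dots> = finprod G f (insert a A) [^]\<^bsub>G\<^esub> k"
    using insert fa fA by (simp add: Gg.finprod_insert)
  finally show ?case .
qed

lemma fsi_add: assumes "fsi u" "fsi w" shows "fsi (\<lambda>x. u x + w x)"
proof -
  have sub: "{x. u x + w x \<noteq> 0} \<subseteq> {x. u x \<noteq> 0} \<union> {x. w x \<noteq> 0}" by auto
  show ?thesis using assms unfolding fsi_def using finite_subset[OF sub] sub by blast
qed

lemma fsi_scale: "fsi u \<Longrightarrow> fsi (\<lambda>x. k * u x)"
  unfolding fsi_def by (rule conjI, rule finite_subset[of _ "{x. u x \<noteq> 0}"]) auto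

lemma Phi_add: assumes u: "fsi u" and w: "fsi w"
  shows "Phi (\<lambda>x. u x + w x) = Phi u \<otimes>\<^bsub>G\<^esub> Phi w"
proof -
  let ?A = "{x. u x \<noteq> 0} \<union> {x. w x \<noteq> 0}"
  have A: "finite ?A" "?A \<subseteq> Ob C" using u w unfolding fsi_def by auto
  have "Phi (\<lambda>x. u x + w x) = finprod G (\<lambda>X. cls X [^]\<^bsub>G\<^esub> (u X + w X)) ?A"
    by (rule Phi_sup[OF fsi_add[OF u w] A(1) _ A(2)]) auto
  also have "\<dots> = finprod G (\<lambda>X. cls X [^]\<^bsub>G\<^esub> u X \<otimes>\<^bsub>G\<^esub> cls X [^]\<^bsub>G\<^esub> w X) ?A"
    using A(2) cls_carrier by (intro Gg.finprod_cong') (auto simp: Gg.int_pow_mult)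
  also have "\<dots> = finprod G (\<lambda>X. cls X [^]\<^bsub>G\<^esub> u X) ?A \<otimes>\<^bsub>G\<^esub> finprod G (\<lambda>X. cls X [^]\<^bsub>G\<^esub> w X) ?A"
    using A(2) pow_car by (intro Gg.finprod_multf) auto
  also have "\<dots> = Phi u \<otimes>\<^bsub>G\<^esub> Phi w"
    using Phi_sup[OF u A(1) _ A(2)] Phi_sup[OF w A(1) _ A(2)] by auto
  finally show ?thesis .
qed

lemma Phi_scale: assumes u: "fsi u" shows "Phi (\<lambda>x. k * u x) = Phi u [^]\<^bsub>G\<^esub> k"
proof -
  let ?A = "{x. u x \<noteq> 0}"
  have A: "finite ?A" "?A \<subseteq> Ob C" using u unfolding fsi_def by auto
  have "Phi (\<lambda>x. k * u x) = finprod G (\<lambda>X. cls X [^]\<^bsub>G\<^esub> (k * u X)) ?A"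
    by (rule Phi_sup[OF fsi_scale[OF u] A(1) _ A(2)]) auto
  also have "\<dots> = finprod G (\<lambda>X. (cls X [^]\<^bsub>G\<^esub> u X) [^]\<^bsub>G\<^esub> k) ?A"
    using A(2) cls_carrier by (intro Gg.finprod_cong') (auto simp: Gg.int_pow_pow mult.commute)
  also have "\<dots> = Phi u [^]\<^bsub>G\<^esub> k"
    unfolding Phi_def using A(2) pow_car by (intro finprod_ipow A(1)) auto
  finally show ?thesis .
qed

lemma fsi_delta: "X \<in> Ob C \<Longrightarrow> fsi (idelta X)"
  unfolding fsi_def idelta_def by auto

lemma Phi_delta: "X \<in> Ob C \<Longrightarrow> Phi (idelta X) = cls X"
proof -
  assume X: "X \<in> Ob C"
  have "{x. idelta X x \<noteq> 0} = {X}" unfolding idelta_def by auto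
  then show ?thesis unfolding Phi_def using cls_carrier[OF X] by (simp add: idelta_def)
qed

lemma of_int_idelta: "(\<lambda>x. of_int (idelta X x)) = delta X"
  unfolding idelta_def delta_def by auto

lemma gen_good: assumes s: "s \<in> delta ` B \<union> tri_rels C"
  shows "\<exists>u. s = (\<lambda>x. of_int (u x)) \<and> fsi u \<and> Phi u = \<one>\<^bsub>G\<^esub>"
proof (cases "s \<in> delta ` B")
  case True
  then obtain X where X: "X \<in> B" "s = delta X" by blast
  have XO: "X \<in> Ob C" using X Bsub by blast
  show ?thesis
    apply (rule exI[of _ "idelta X"])
    using X XO fsi_delta Phi_delta of_int_idelta[of X, symmetric] cls_one by auto
next
  case False
  then obtain f g h where d: "(f, g, h) \<in> dtri C"
     and se: "s = (\<lambda>x. delta (src C f) x - delta (src C g) x + delta (src C h) x)"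
    using s unfolding tri_rels_def by blast
  let ?X = "src C f" and ?Y = "src C g" and ?Z = "src C h"
  have ob: "?X \<in> Ob C" "?Y \<in> Ob C" "?Z \<in> Ob C" using dt_ob[OF d] by auto
  let ?u = "\<lambda>x. (idelta ?X x + (-1) * idelta ?Y x) + idelta ?Z x"
  have f1: "fsi (\<lambda>x. idelta ?X x + (-1) * idelta ?Y x)" using fsi_add fsi_scale fsi_delta ob by blast
  have p1: "Phi ?u = Phi (\<lambda>x. idelta ?X x + (-1) * idelta ?Y x) \<otimes>\<^bsub>G\<^esub> Phi (idelta ?Z)"
    by (rule Phi_add[OF f1 fsi_delta[OF ob(3)]])
  have p2: "Phi (\<lambda>x. idelta ?X x + (-1) * idelta ?Y x) = Phi (idelta ?X) \<otimes>\<^bsub>G\<^esub> Phi (\<lambda>x. (-1) * idelta ?Y x)"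
    by (rule Phi_add[OF fsi_delta[OF ob(1)] fsi_scale[OF fsi_delta[OF ob(2)]]])
  have p3: "Phi (\<lambda>x. (-1) * idelta ?Y x) = Phi (idelta ?Y) [^]\<^bsub>G\<^esub> (-1::int)"
    by (rule Phi_scale[OF fsi_delta[OF ob(2)]])
  have "Phi ?u = (cls ?X \<otimes>\<^bsub>G\<^esub> cls ?Y [^]\<^bsub>G\<^esub> (-1::int)) \<otimes>\<^bsub>G\<^esub> cls ?Z"
    unfolding p1 p2 p3 Phi_delta[OF ob(1)] Phi_delta[OF ob(2)] Phi_delta[OF ob(3)] ..
  also have "\<dots> = \<one>\<^bsub>G\<^esub>"
  proof -
    have c: "cls ?X \<in> carrier G" "cls ?Y \<in> carrier G" "cls ?Z \<in> carrier G" using cls_carrier ob by auto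
    have "cls ?Y [^]\<^bsub>G\<^esub> (-1::int) = inv\<^bsub>G\<^esub> (cls ?X \<otimes>\<^bsub>G\<^esub> cls ?Z)"
      using add_tri[OF d] c by (simp add: Gg.int_pow_neg)
    then have e: "cls ?Y [^]\<^bsub>G\<^esub> (-1::int) = inv\<^bsub>G\<^esub> cls ?X \<otimes>\<^bsub>G\<^esub> inv\<^bsub>G\<^esub> cls ?Z"
      using c by (simp add: Gg.inv_mult)
    show ?thesis unfolding e using c by (simp add: Gg.m_assoc[symmetric])
  qed
  finally have A1: "Phi ?u = \<one>\<^bsub>G\<^esub>" .
  have A2: "fsi ?u" using fsi_add f1 fsi_delta ob by blast
  have A3: "s = (\<lambda>x. of_int (?u x))" using se by (auto simp: fun_eq_iff idelta_def delta_def)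
  show ?thesis using A1 A2 A3 by (intro exI[of _ ?u] conjI) assumption+
qed

lemma span_good:
  assumes v: "v \<in> qm.span (delta ` B \<union> tri_rels C)"
  shows "\<exists>N u. N > (0::int) \<and> (\<lambda>x. of_int N * v x) = (\<lambda>x. of_int (u x)) \<and> fsi u \<and> Phi u = \<one>\<^bsub>G\<^esub>"
  using v
proof (induct rule: qm.span_induct_alt)
  case base
  show ?case
    apply (rule exI[of _ 1], rule exI[of _ "\<lambda>x. 0"])
    by (auto simp: fsi_def Phi_def)
next
  case (step c s y)
  obtain N u where Nu: "N > 0" "(\<lambda>x. of_int N * y x) = (\<lambda>x. of_int (u x))" "fsi u" "Phi u = \<one>\<^bsub>G\<^esub>"
    using step by blast
  obtain w where w: "s = (\<lambda>x. of_int (w x))" "fsi w" "Phi w = \<one>\<^bsub>G\<^esub>" using gen_good[OF step(1)] by blast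
  obtain a b where ab: "quotient_of c = (a, b)" by (cases "quotient_of c")
  have b: "b > 0" "c = of_int a / of_int b" using ab quotient_of_denom_pos quotient_of_div by blast+
  let ?u = "\<lambda>x. (N * a) * w x + b * u x"
  have "(\<lambda>x. of_int (b * N) * (c * s x + y x)) = (\<lambda>x. of_int (?u x))"
  proof
    fix x
    have e: "of_int N * y x = of_int (u x)" using Nu(2) by meson
    have "of_int (b * N) * (c * s x + y x) = of_int N * of_int a * s x + of_int b * (of_int N * y x)"
      using b by (simp add: field_simps)
    then show "of_int (b * N) * (c * s x + y x) = of_int (?u x)" using e w(1) by simp
  qed
  moreover have "fsi ?u" using fsi_add fsi_scale w(2) Nu(3) by blast
  moreover have "Phi ?u = \<one>\<^bsub>G\<^esub>"
    using Phi_add[OF fsi_scale[OF w(2)] fsi_scale[OF Nu(3)]] Phi_scale[OF w(2)] Phi_scale[OF Nu(3)] w(3) Nu(4)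
    by simp
  moreover have "b * N > 0" using b Nu by simp
  moreover have "(\<lambda>x. of_int (b * N) * ((\<lambda>x. c * s x) + y) x) = (\<lambda>x. of_int (b * N) * (c * s x + y x))"
    by (simp add: plus_fun_def)
  ultimately show ?case by metis
qed

lemma npow_exists: "U \<in> Ob C \<Longrightarrow> \<exists>S. S \<in> Ob C \<and> npow C U n S \<and> cls S = cls U [^]\<^bsub>G\<^esub> n"
proof (induct n)
  case 0 then show ?case using Z0 G_one by auto
next
  case (Suc n)
  then obtain T where T: "T \<in> Ob C" "npow C U n T" "cls T = cls U [^]\<^bsub>G\<^esub> n" by blast
  have "cls (bsum T U) = cls U [^]\<^bsub>G\<^esub> Suc n" using cls_biprod[OF bsum[OF T(1) Suc(2)]] T by simp
  then show ?case using bsum[OF T(1) Suc(2)] bsum_ob T Suc(2) by auto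
qed

lemma span_delta_in_B:
  assumes rad: "radical C B" and U: "U \<in> Ob C" and v: "delta U \<in> gimgQ C B"
  shows "U \<in> B"
proof -
  have "delta U \<in> qm.span (delta ` B \<union> tri_rels C)" using v unfolding gimgQ_def qspan_span .
  then obtain N u where Nu: "N > 0" "(\<lambda>x. of_int N * delta U x) = (\<lambda>x. of_int (u x))" "fsi u" "Phi u = \<one>\<^bsub>G\<^esub>"
    using span_good by blast
  have "u = (\<lambda>x. N * idelta U x)"
  proof
    fix x have "of_int N * delta U x = (of_int (u x) :: rat)" using Nu(2) by meson
    then show "u x = N * idelta U x" unfolding delta_def idelta_def by (cases "x = U") auto
  qed
  then have "Phi u = cls U [^]\<^bsub>G\<^esub> N" using Phi_scale[OF fsi_delta[OF U]] Phi_delta[OF U] by simp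
  then have e: "cls U [^]\<^bsub>G\<^esub> nat N = \<one>\<^bsub>G\<^esub>" using Nu(1,4) by (metis int_pow_int int_nat_eq less_imp_le)
  obtain S where S: "S \<in> Ob C" "npow C U (nat N) S" "cls S = cls U [^]\<^bsub>G\<^esub> nat N" using npow_exists[OF U] by blast
  have "S \<in> B" using cls_one S e by auto
  moreover have "nat N \<ge> 1" using Nu(1) by simp
  ultimately show ?thesis using rad U S unfolding radical_def by blast
qed

end

context TCB begin

lemma gimg_span: "gimgQ C D = qm.span (delta ` D \<union> tri_rels C)"
  unfolding gimgQ_def qspan_span ..

abbreviation "Hs \<equiv> gimgQ C B"

lemma rel_in: "(f, g, h) \<in> dtri C \<Longrightarrow> (\<lambda>x. delta (src C f) x - delta (src C g) x + delta (src C h) x) \<in> Hs"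
  unfolding gimg_span by (rule qm.span_base) (auto simp: tri_rels_def)

lemma three:
  assumes d: "(f, g, h) \<in> dtri C"
  shows "delta (src C f) \<in> Hs \<Longrightarrow> delta (src C g) \<in> Hs \<Longrightarrow> delta (src C h) \<in> Hs"
    and "delta (src C f) \<in> Hs \<Longrightarrow> delta (src C h) \<in> Hs \<Longrightarrow> delta (src C g) \<in> Hs"
    and "delta (src C g) \<in> Hs \<Longrightarrow> delta (src C h) \<in> Hs \<Longrightarrow> delta (src C f) \<in> Hs"
proof -
  let ?r = "(\<lambda>x. delta (src C f) x - delta (src C g) x + delta (src C h) x)"
  have r: "?r \<in> Hs" using rel_in[OF d] .
  show "delta (src C f) \<in> Hs \<Longrightarrow> delta (src C g) \<in> Hs \<Longrightarrow> delta (src C h) \<in> Hs"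
  proof -
    assume a: "delta (src C f) \<in> Hs" "delta (src C g) \<in> Hs"
    have "(?r - delta (src C f)) + delta (src C g) \<in> Hs"
      using a r unfolding gimg_span by (intro qm.span_add qm.span_diff)
    moreover have "(?r - delta (src C f)) + delta (src C g) = delta (src C h)" by (auto simp: fun_eq_iff)
    ultimately show ?thesis by simp
  qed
  show "delta (src C f) \<in> Hs \<Longrightarrow> delta (src C h) \<in> Hs \<Longrightarrow> delta (src C g) \<in> Hs"
  proof -
    assume a: "delta (src C f) \<in> Hs" "delta (src C h) \<in> Hs"
    have "(delta (src C f) + delta (src C h)) - ?r \<in> Hs"
      using a r unfolding gimg_span by (intro qm.span_add qm.span_diff)
    moreover have "(delta (src C f) + delta (src C h)) - ?r = delta (src C g)" by (auto simp: fun_eq_iff)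
    ultimately show ?thesis by simp
  qed
  show "delta (src C g) \<in> Hs \<Longrightarrow> delta (src C h) \<in> Hs \<Longrightarrow> delta (src C f) \<in> Hs"
  proof -
    assume a: "delta (src C g) \<in> Hs" "delta (src C h) \<in> Hs"
    have "(?r + delta (src C g)) - delta (src C h) \<in> Hs"
      using a r unfolding gimg_span by (intro qm.span_add qm.span_diff)
    moreover have "(?r + delta (src C g)) - delta (src C h) = delta (src C f)" by (auto simp: fun_eq_iff)
    ultimately show ?thesis by simp
  qed
qed

lemma triv_zero_in: assumes t: "(idm C X, mzero C X Z, mzero C Z (shO C X)) \<in> dtri C" and Z: "zero_obj C Z"
   and X: "X \<in> Ob C"
  shows "delta Z \<in> Hs"
proof -
  have ZO: "Z \<in> Ob C" using Z zero_obj_ob by blast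
  have s: "src C (idm C X) = X" "src C (mzero C X Z) = X" "src C (mzero C Z (shO C X)) = Z"
    using X ZO sh_ob by (simp_all add: M)
  have "(\<lambda>x. delta X x - delta X x + delta Z x) \<in> Hs" using rel_in[OF t] s by simp
  moreover have "(\<lambda>x. delta X x - delta X x + delta Z x) = delta Z" by auto
  ultimately show ?thesis by simp
qed

lemma iso_dt: assumes f: "f \<in> H X Y" "iso_mor C f" and Z: "zero_obj C Z"
  and t: "(idm C X, mzero C X Z, mzero C Z (shO C X)) \<in> dtri C"
  shows "(f, mzero C Y Z, mzero C Z (shO C X)) \<in> dtri C"
proof -
  have o: "X \<in> Ob C" "Y \<in> Ob C" "Z \<in> Ob C" "shO C X \<in> Ob C" using f hom_ob Z zero_obj_ob sh_ob by auto
  have fm: "f \<in> Mor C" "src C f = X" "tgt C f = Y" using f by (auto simp: hom_iff)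
  have it: "is_tri C f (mzero C Y Z) (mzero C Z (shO C X))" unfolding is_tri_def using o fm by (simp add: M)
  have tm: "tri_mor C (idm C X) (mzero C X Z) (mzero C Z (shO C X)) f (mzero C Y Z) (mzero C Z (shO C X))
      (idm C X) f (idm C Z)"
    unfolding tri_mor_def using o fm sh_id by (simp add: M hom_iff)
  show ?thesis using tr1[OF t it tm id_iso[OF o(1)] f(2) id_iso[OF o(3)]] .
qed

definition D0 where "D0 = {U \<in> Ob C. delta U \<in> Hs}"

lemma B_D0: "B \<subseteq> D0"
  unfolding D0_def gimg_span using Bsub by (auto intro: qm.span_base)

lemma D0_ts: "tri_sub C D0"
  unfolding tri_sub_def
proof (intro conjI allI impI ballI)
  show "D0 \<subseteq> Ob C" unfolding D0_def by blast
  show "\<exists>Z\<in>D0. zero_obj C Z" using B_D0 Z0 by blast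
next
  fix X Y assume X: "X \<in> D0" and Y: "Y \<in> Ob C" and i: "isomorphic C X Y"
  obtain f where f: "f \<in> H X Y" "iso_mor C f" using i unfolding isomorphic_def by blast
  have XO: "X \<in> Ob C" using X unfolding D0_def by blast
  obtain Z where Z: "zero_obj C Z" and t: "(idm C X, mzero C X Z, mzero C Z (shO C X)) \<in> dtri C"
    using triv[OF XO] by blast
  have d: "(f, mzero C Y Z, mzero C Z (shO C X)) \<in> dtri C" using iso_dt[OF f Z t] .
  have s: "src C f = X" "src C (mzero C Y Z) = Y" "src C (mzero C Z (shO C X)) = Z"
    using f Y Z zero_obj_ob XO sh_ob by (auto simp: hom_iff M)
  have "delta Y \<in> Hs" using three(2)[OF d] s triv_zero_in[OF t Z XO] X unfolding D0_def by simp
  then show "Y \<in> D0" using Y unfolding D0_def by blast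
next
  fix X assume XO: "X \<in> Ob C"
  obtain Z where Z: "zero_obj C Z" and t: "(idm C X, mzero C X Z, mzero C Z (shO C X)) \<in> dtri C"
    using triv[OF XO] by blast
  have d: "(mzero C X Z, mzero C Z (shO C X), mneg C (shM C (idm C X))) \<in> dtri C" using rot[OF t] .
  have s: "src C (mzero C X Z) = X" "src C (mzero C Z (shO C X)) = Z" "src C (mneg C (shM C (idm C X))) = shO C X"
    using XO Z zero_obj_ob sh_ob src_rot[OF t] src_id by (auto simp: M)
  have zi: "delta Z \<in> Hs" using triv_zero_in[OF t Z XO] .
  have "delta X \<in> Hs \<longleftrightarrow> delta (shO C X) \<in> Hs"
    using three(1)[OF d] three(3)[OF d] s zi by auto
  then show "X \<in> D0 \<longleftrightarrow> shO C X \<in> D0" using XO sh_ob unfolding D0_def by auto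
next
  fix f g h assume a0: "(f, g, h) \<in> dtri C \<and> src C f \<in> D0 \<and> src C g \<in> D0"
  then have d: "(f, g, h) \<in> dtri C" and a: "src C f \<in> D0" "src C g \<in> D0" by auto
  have "delta (src C h) \<in> Hs" using three(1)[OF d] a unfolding D0_def by blast
  then show "src C h \<in> D0" using dt_ob[OF d] unfolding D0_def by blast
qed

lemma D0_dense: "dense_sub C D0"
  unfolding dense_sub_def using D0_ts Bdense B_D0 by blast

lemma D0_gimg: "gimgQ C D0 = Hs"
proof
  have "delta ` D0 \<union> tri_rels C \<subseteq> qm.span (delta ` B \<union> tri_rels C)"
    using qm.span_superset unfolding D0_def gimg_span by blast
  then show "gimgQ C D0 \<subseteq> Hs" unfolding gimg_span using qm.span_mono qm.span_span by metis
  show "Hs \<subseteq> gimgQ C D0" unfolding gimg_span using B_D0 by (intro qm.span_mono) blast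
qed

lemma D0_max: "maximal_in (Iset C Hs) D0"
  unfolding maximal_in_def
proof (intro conjI ballI impI)
  show "D0 \<in> Iset C Hs" unfolding Iset_def using D0_dense D0_gimg by blast
next
  fix D' assume D': "D' \<in> Iset C Hs" and sub: "D0 \<subseteq> D'"
  have "D' \<subseteq> D0"
  proof
    fix U assume U: "U \<in> D'"
    have "dense_sub C D'" "gimgQ C D' = Hs" using D' unfolding Iset_def by auto
    then have "U \<in> Ob C" "delta U \<in> Hs"
      using U unfolding dense_sub_def tri_sub_def gimg_span by (auto intro: qm.span_base)
    then show "U \<in> D0" unfolding D0_def by blast
  qed
  then show "D' = D0" using sub by blast
qed

lemma main: assumes rad: "radical C B" and uniq: "\<forall>D'. maximal_in (Iset C (gimgQ C B)) D' \<longrightarrow> D' = D"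
  shows "B = D"
proof -
  have "D0 = D" using uniq D0_max by blast
  moreover have "D0 \<subseteq> B" using span_delta_in_B[OF rad] unfolding D0_def by blast
  ultimately show ?thesis using B_D0 by blast
qed

end

theorem proposition3p11:
  fixes C :: "('o, 'm) tricat" and B D :: "'o set"
  assumes "triangulated C"
    and "dense_sub C B" and "radical C B"
    and "maximal_in (Iset C (gimgQ C B)) D"
    and "\<forall>D'. maximal_in (Iset C (gimgQ C B)) D' \<longrightarrow> D' = D"
  shows "B = D"
proof -
  have T: "TCB C B" by (intro TCB.intro TC.intro TCB_axioms.intro assms(1,2))
  show ?thesis using TCB.main[OF T assms(3,5)] .
qed

end
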